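(* Let $t$ be any open term of $P_{\mathrm{PA}}$ (a nondeterministic probabilistic process term) and let $\sigma_1,\sigma_2$ be closed substitutions such that $\mathbf d(\sigma_1(x),\sigma_2(x))<1$ for every state variable $x$. Then \[ \mathbf d(\sigma_1(t),\sigma_2(t))\le \mathrm{da}\bigl(\llbracket t\rrbracket,\mathbf d(\sigma_1,\sigma_2)\bigr). \]
   Context: Probabilistic transition systems and bisimilarity metric. A signature $\Sigma$ is a countable set of operators $f$, each with an arity $r(f)\in\mathbb N$. Fix disjoint countably infinite sets $\mathcal V_s$ of state variables and $\mathcal V_d$ of distribution variables; $\mathcal V=\mathcal V_s\cup\mathcal V_d$. Open (state) terms are built from state variables and operators; closed terms (processes) $T(\Sigma)$ contain no variables. $\Delta(T(\Sigma))$ is the set of discrete probability distributions on $T(\Sigma)$, $\delta_t$ is the Dirac distribution at $t$, and for distributions $\pi_1,\dots,\pi_{r(f)}$, $f(\pi_1,\dots,\pi_{r(f)})$ is the distribution assigning $f(t_1,\dots,t_{r(f)})$ probability $\prod_i\pi_i(t_i)$. Distribution terms are: distribution variables $\mu$, $\delta(t)$ for state terms $t$, convex combinations $\sum_{i\in I}q_i\theta_i$ ($q_i\in(0,1]$, $\sum q_i=1$), and $f(\theta_1,\dots,\theta_{r(f)})$. A closed substitution $\sigma$ maps state variables to closed terms and distribution variables to distributions; it extends homomorphically to state terms and to distribution terms via $\sigma(\delta(t))=\delta_{\sigma(t)}$, $\sigma(\sum q_i\theta_i)=\sum q_i\sigma(\theta_i)$, $\sigma(f(\theta_1,\dots))=f(\sigma(\theta_1),\dots)$.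 A PTS is $(T(\Sigma),A,\to)$ with $A$ a countable set of actions and $\to\subseteq T(\Sigma)\times A\times\Delta(T(\Sigma))$; write $t\xrightarrow{a}\pi$, and $\mathit{der}(t,a)=\{\pi\mid t\xrightarrow a\pi\}$. A PGSOS rule has the form $\dfrac{\{x_i\xrightarrow{a_{i,m}}\mu_{i,m}\mid i\in I,m\in M_i\}\ \ \{x_i\not\xrightarrow{b_{i,n}}\mid i\in I,n\in N_i\}}{f(x_1,\dots,x_{r(f)})\xrightarrow{a}\theta}$ with $I=\{1,\dots,r(f)\}$, finite $M_i,N_i$, pairwise distinct $x_i\in\mathcal V_s$, pairwise distinct $\mu_{i,m}\in\mathcal V_d$, and $\theta$ a distribution term whose variables are among the $x_i$ and $\mu_{i,m}$. A PTSS $(\Sigma,A,R)$ with $R$ a countable set of PGSOS rules determines a unique supported model: $t\xrightarrow a\pi$ iff for some rule and closed substitution $\sigma$, $\sigma(x_i)\xrightarrow{a_{i,m}}\sigma(\mu_{i,m})$ for all positive premises, $\sigma(x_i)$ has no $b_{i,n}$-transition for all negative premises, $\sigma(f(x_1,\dots))=t$ and $\sigma(\theta)=\pi$. For $d:T(\Sigma)\times T(\Sigma)\to[0,1]$, the Kantorovich lifting is $K(d)(\pi,\pi')=\min_{\omega}\sum_{t,t'}d(t,t')\omega(t,t')$ over couplings $\omega$ of $\pi,\pi'$; the Hausdorff lifting is $H(\hat d)(\Pi_1,\Pi_2)=\max\{\sup_{\pi_1\in\Pi_1}\inf_{\pi_2\in\Pi_2}\hat d(\pi_1,\pi_2),\sup_{\pi_2\in\Pi_2}\inf_{\pi_1\in\Pi_1}\hat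 d(\pi_2,\pi_1)\}$ with $\inf\emptyset=1$, $\sup\emptyset=0$. Let $B(d)(t,t')=\sup_{a\in A}H(K(d))(\mathit{der}(t,a),\mathit{der}(t',a))$. The bisimilarity metric $\mathbf d$ is the least fixed point of $B$ on $[0,1]^{T(\Sigma)\times T(\Sigma)}$ ordered pointwise. The process algebra $P_{\mathrm{PA}}$: operators are the constant $0$, for each $a\in A$, $n\ge1$, $q_1,\dots,q_n\in(0,1]$ with $\sum q_i=1$ the $n$-ary prefix $a.\bigoplus_{i=1}^n[q_i]\_$, binary $+$, and binary $\|_B$ for each $B\subseteq A$. Rules: $a.\bigoplus_{i}[q_i]x_i\xrightarrow a\sum_i q_i\delta(x_i)$; from $x_1\xrightarrow a\mu_1$ infer $x_1+x_2\xrightarrow a\mu_1$; from $x_2\xrightarrow a\mu_2$ infer $x_1+x_2\xrightarrow a\mu_2$; for $a\in B$ from $x_1\xrightarrow a\mu_1$, $x_2\xrightarrow a\mu_2$ infer $x_1\|_Bx_2\xrightarrow a\mu_1\|_B\mu_2$; for $a\notin B$ from $x_1\xrightarrow a\mu_1$ infer $x_1\|_Bx_2\xrightarrow a\mu_1\|_B\delta(x_2)$ and from $x_2\xrightarrow a\mu_2$ infer $x_1\|_Bx_2\xrightarrow a\delta(x_1)\|_B\mu_2$. Multiplicities: $\mathcal M$ is the set of maps $m:\mathcal V\to\mathbb N\cup\{\infty\}$, ordered pointwise; $0$ is the zero map and $n_V$ ($V\subseteq\mathcal V$) maps $x\in V$ to $n$ and other variables to $0$; $1_x=1_{\{x\}}$.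 $\mathcal P$ is the set of discrete probability distributions on $\mathcal M$ (probabilistic multiplicities); $0$ and $n_V$ also denote the corresponding Dirac distributions in $\mathcal P$. For a subdistribution $\pi$ on $\mathcal M$ with mass $|\pi|$, its weighting is $\overline\pi(x)=\frac1{|\pi|}\sum_m\pi(m)m(x)$ if $|\pi|>0$, and $\overline\pi(x)=0$ otherwise. For $p_1,p_2\in\mathcal P$: $p_1\sqsubseteq p_2$ iff there is a coupling $\omega$ of $p_1,p_2$ (distribution on $\mathcal M\times\mathcal M$ with marginals $p_1,p_2$) with $\overline{\omega(\cdot,m)}\le m$ pointwise for all $m\in\mathcal M$, where $\omega(\cdot,m)$ is the subdistribution $m'\mapsto\omega(m',m)$. For $P\subseteq\mathcal P$, $\downarrow P=\{p\mid p\sqsubseteq p'\text{ for some }p'\in P\}$; $\mathcal D$ is the set of nonempty $P\subseteq\mathcal P$ with $\downarrow P=P$. The denotation $\llbracket t\rrbracket\in\mathcal D$ of an open term of $P_{\mathrm{PA}}$ is: $\llbracket0\rrbracket=\{\delta_0\}$; $\llbracket x\rrbracket=\downarrow\{\delta_{1_x}\}$; $p\in\llbracket t_1\|_Bt_2\rrbracket$ iff there are $p_1\in\llbracket t_1\rrbracket$, $p_2\in\llbracket t_2\rrbracket$ with $p\sqsubseteq p'$ where $p'(m)=\sum\{p_1(m_1)p_2(m_2)\mid m(x)=m_1(x)+m_2(x)\ \forall x\}$; $p\in\llbracket a.\bigoplus_{i=1}^n[q_i]t_i\rrbracket$ iff there are $p_i\in\llbracket t_i\rrbracket$ with $p\sqsubseteq\sum_i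 q_ip_i$; $\llbracket t_1+t_2\rrbracket=\llbracket t_1\rrbracket\cup\llbracket t_2\rrbracket$. $\mathcal E$ is the set of maps $e:\mathcal V\to[0,1)$. $\mathrm{dda}(m,e)=1-\prod_{x\in\mathcal V}(1-e(x))^{m(x)}$ (with $c^\infty=0$ for $0\le c<1$, $1^\infty=1$), $\mathrm{pda}(p,e)=\sum_m p(m)\mathrm{dda}(m,e)$, $\mathrm{da}(P,e)=\sup_{p\in P}\mathrm{pda}(p,e)$. For closed substitutions, $\mathbf d(\sigma_1,\sigma_2)\in\mathcal E$ is $x\mapsto\mathbf d(\sigma_1(x),\sigma_2(x))$. *)

theory Defs
  imports "HOL-Probability.Probability"
begin

text \<open>Actions 'a, state variables 'v. The prefix operator a.(+)[q_i] t_i is represented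
  by a list of (probability, argument) pairs.\<close>

datatype ('a, 'v) pterm =
    PNil
  | PVar 'v
  | Pref 'a "(real \<times> ('a, 'v) pterm) list"
  | Plus "('a, 'v) pterm" "('a, 'v) pterm"
  | Par "'a set" "('a, 'v) pterm" "('a, 'v) pterm"

text \<open>Well-formedness: prefix operators belong to the signature only when n >= 1,
  q_i in (0,1] and the q_i sum to 1.\<close>
primrec wf_term :: "('a, 'v) pterm \<Rightarrow> bool" where
  "wf_term PNil = True"
| "wf_term (PVar x) = True"
| "wf_term (Pref a qs) =
     (qs \<noteq> [] \<and> (\<forall>(q, u) \<in> set qs. 0 < q \<and> q \<le> 1) \<and> sum_list (map fst qs) = 1 \<and>
      list_all snd (map (map_prod id wf_term) qs))"
| "wf_term (Plus t1 t2) = (wf_term t1 \<and> wf_term t2)"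
| "wf_term (Par B t1 t2) = (wf_term t1 \<and> wf_term t2)"

primrec vars :: "('a, 'v) pterm \<Rightarrow> 'v set" where
  "vars PNil = {}"
| "vars (PVar x) = {x}"
| "vars (Pref a qs) = \<Union> (set (map snd (map (map_prod id vars) qs)))"
| "vars (Plus t1 t2) = vars t1 \<union> vars t2"
| "vars (Par B t1 t2) = vars t1 \<union> vars t2"

definition proc :: "('a, 'v) pterm \<Rightarrow> bool" where
  "proc t \<longleftrightarrow> vars t = {} \<and> wf_term t"

primrec subst :: "('v \<Rightarrow> ('a, 'v) pterm) \<Rightarrow> ('a, 'v) pterm \<Rightarrow> ('a, 'v) pterm" where
  "subst \<sigma> PNil = PNil"
| "subst \<sigma> (PVar x) = \<sigma> x"
| "subst \<sigma> (Pref a qs) = Pref a (map (map_prod id (subst \<sigma>)) qs)"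
| "subst \<sigma> (Plus t1 t2) = Plus (subst \<sigma> t1) (subst \<sigma> t2)"
| "subst \<sigma> (Par B t1 t2) = Par B (subst \<sigma> t1) (subst \<sigma> t2)"

definition closed_subst :: "('v \<Rightarrow> ('a, 'v) pterm) \<Rightarrow> bool" where
  "closed_subst \<sigma> \<longleftrightarrow> (\<forall>x. proc (\<sigma> x))"

definition mix :: "(real \<times> 'x pmf) list \<Rightarrow> 'x pmf" where
  "mix l = bind_pmf (pmf_of_list (map (\<lambda>(q, p). (p, q)) l)) id"

text \<open>All rules are positive, so the unique supported model is the inductively
  defined transition relation.\<close>
inductive trans :: "('a, 'v) pterm \<Rightarrow> 'a \<Rightarrow> ('a, 'v) pterm pmf \<Rightarrow> bool" where
  pref: "trans (Pref a qs) a (mix (map (\<lambda>(q, u). (q, return_pmf u)) qs))"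
| plus1: "trans t1 a \<pi> \<Longrightarrow> trans (Plus t1 t2) a \<pi>"
| plus2: "trans t2 a \<pi> \<Longrightarrow> trans (Plus t1 t2) a \<pi>"
| sync: "a \<in> B \<Longrightarrow> trans t1 a \<pi>1 \<Longrightarrow> trans t2 a \<pi>2 \<Longrightarrow>
     trans (Par B t1 t2) a (map_pmf (\<lambda>(u1, u2). Par B u1 u2) (pair_pmf \<pi>1 \<pi>2))"
| left: "a \<notin> B \<Longrightarrow> trans t1 a \<pi>1 \<Longrightarrow>
     trans (Par B t1 t2) a (map_pmf (\<lambda>u1. Par B u1 t2) \<pi>1)"
| right: "a \<notin> B \<Longrightarrow> trans t2 a \<pi>2 \<Longrightarrow>
     trans (Par B t1 t2) a (map_pmf (\<lambda>u2. Par B t1 u2) \<pi>2)"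

definition der :: "('a, 'v) pterm \<Rightarrow> 'a \<Rightarrow> ('a, 'v) pterm pmf set" where
  "der t a = {\<pi>. trans t a \<pi>}"

definition couplings :: "'x pmf \<Rightarrow> 'y pmf \<Rightarrow> ('x \<times> 'y) pmf set" where
  "couplings p q = {\<omega>. map_pmf fst \<omega> = p \<and> map_pmf snd \<omega> = q}"

definition kantorovich :: "('x \<Rightarrow> 'x \<Rightarrow> real) \<Rightarrow> 'x pmf \<Rightarrow> 'x pmf \<Rightarrow> real" where
  "kantorovich d \<pi> \<pi>' =
     Inf ((\<lambda>\<omega>. measure_pmf.expectation \<omega> (\<lambda>(t, t'). d t t')) ` couplings \<pi> \<pi>')"

definition infs :: "real set \<Rightarrow> real" where
  "infs S = (if S = {} then 1 else Inf S)"

definition sups :: "real set \<Rightarrow> real" where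
  "sups S = (if S = {} then 0 else Sup S)"

definition hausdorff :: "('y \<Rightarrow> 'y \<Rightarrow> real) \<Rightarrow> 'y set \<Rightarrow> 'y set \<Rightarrow> real" where
  "hausdorff dh P1 P2 =
     max (sups ((\<lambda>p1. infs ((\<lambda>p2. dh p1 p2) ` P2)) ` P1))
         (sups ((\<lambda>p2. infs ((\<lambda>p1. dh p2 p1) ` P1)) ` P2))"

text \<open>Functional B on [0,1]^(T(Sigma) x T(Sigma)); pseudometrics are represented as functions on
  all terms which vanish outside pairs of processes.\<close>
definition Bfun :: "(('a, 'v) pterm \<Rightarrow> ('a, 'v) pterm \<Rightarrow> real) \<Rightarrow>
                    ('a, 'v) pterm \<Rightarrow> ('a, 'v) pterm \<Rightarrow> real" where
  "Bfun d t t' =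
     (if proc t \<and> proc t'
      then sups ((\<lambda>a. hausdorff (kantorovich d) (der t a) (der t' a)) ` UNIV)
      else 0)"

definition metric_dom :: "(('a, 'v) pterm \<Rightarrow> ('a, 'v) pterm \<Rightarrow> real) set" where
  "metric_dom = {d. \<forall>t t'. 0 \<le> d t t' \<and> d t t' \<le> 1 \<and>
                          (\<not> (proc t \<and> proc t') \<longrightarrow> d t t' = 0)}"

definition bisim_metric :: "('a, 'v) pterm \<Rightarrow> ('a, 'v) pterm \<Rightarrow> real" where
  "bisim_metric = (THE d. d \<in> metric_dom \<and> Bfun d = d \<and>
                      (\<forall>d' \<in> metric_dom. Bfun d' = d' \<longrightarrow> d \<le> d'))"

type_synonym 'v mult = "'v \<Rightarrow> enat"

definition one_var :: "'v \<Rightarrow> 'v mult" where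
  "one_var x = (\<lambda>y. if y = x then 1 else 0)"

definition weighting :: "('v mult \<times> 'v mult) pmf \<Rightarrow> 'v mult \<Rightarrow> 'v \<Rightarrow> ennreal" where
  "weighting \<omega> m x =
     (let mass = (\<integral>\<^sup>+ m'. ennreal (pmf \<omega> (m', m)) \<partial>count_space UNIV) in
      if mass > 0
      then (\<integral>\<^sup>+ m'. ennreal (pmf \<omega> (m', m)) * ennreal_of_enat (m' x) \<partial>count_space UNIV) / mass
      else 0)"

definition pm_le :: "'v mult pmf \<Rightarrow> 'v mult pmf \<Rightarrow> bool" (infix "\<sqsubseteq>\<^sub>m" 50) where
  "p1 \<sqsubseteq>\<^sub>m p2 \<longleftrightarrow> (\<exists>\<omega> \<in> couplings p1 p2.
      \<forall>m x. weighting \<omega> m x \<le> ennreal_of_enat (m x))"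

definition down :: "'v mult pmf set \<Rightarrow> 'v mult pmf set" where
  "down P = {p. \<exists>p' \<in> P. p \<sqsubseteq>\<^sub>m p'}"

primrec den :: "('a, 'v) pterm \<Rightarrow> 'v mult pmf set" where
  "den PNil = {return_pmf (\<lambda>_. 0)}"
| "den (PVar x) = down {return_pmf (one_var x)}"
| "den (Pref a qs) =
     {p. \<exists>ps. list_all2 (\<lambda>(q, P) p'. p' \<in> P) (map (map_prod id den) qs) ps \<and>
             p \<sqsubseteq>\<^sub>m mix (zip (map fst qs) ps)}"
| "den (Plus t1 t2) = den t1 \<union> den t2"
| "den (Par B t1 t2) =
     {p. \<exists>p1 \<in> den t1. \<exists>p2 \<in> den t2.
        p \<sqsubseteq>\<^sub>m map_pmf (\<lambda>(m1, m2). \<lambda>x. m1 x + m2 x) (pair_pmf p1 p2)}"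

definition epow :: "real \<Rightarrow> enat \<Rightarrow> real" where
  "epow c n = (case n of enat k \<Rightarrow> c ^ k | \<infinity> \<Rightarrow> (if c = 1 then 1 else 0))"

text \<open>Product over all (possibly infinitely many) variables of factors in [0,1]:
  infimum of the finite partial products.\<close>
definition dda :: "'v mult \<Rightarrow> ('v \<Rightarrow> real) \<Rightarrow> real" where
  "dda m e = 1 - Inf ((\<lambda>F. \<Prod>x\<in>F. epow (1 - e x) (m x)) ` {F. finite F})"

definition pda :: "'v mult pmf \<Rightarrow> ('v \<Rightarrow> real) \<Rightarrow> real" where
  "pda p e = measure_pmf.expectation p (\<lambda>m. dda m e)"

definition da :: "'v mult pmf set \<Rightarrow> ('v \<Rightarrow> real) \<Rightarrow> real" where
  "da P e = Sup ((\<lambda>p. pda p e) ` P)"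

end

theory Submission
  imports Defs
begin


lemma E_bounds:
  fixes f :: "'x \<Rightarrow> real"
  assumes "\<And>x. a \<le> f x" "\<And>x. f x \<le> b"
  shows "a \<le> measure_pmf.expectation p f" "measure_pmf.expectation p f \<le> b"
proof -
  have ab: "\<bar>f x\<bar> \<le> max \<bar>a\<bar> \<bar>b\<bar>" for x using assms[of x] by (smt (verit))
  have int: "integrable (measure_pmf p) f"
    by (rule measure_pmf.integrable_const_bound[where B="max \<bar>a\<bar> \<bar>b\<bar>"]) (use ab in auto)
  show "a \<le> measure_pmf.expectation p f"
    using integral_mono[OF _ int, of "\<lambda>_. a"] assms by simp
  show "measure_pmf.expectation p f \<le> b"
    using integral_mono[OF int _, of "\<lambda>_. b"] assms by simp
qed

lemma E_int:
  fixes f :: "'x \<Rightarrow> real"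
  assumes "\<And>x. a \<le> f x" "\<And>x. f x \<le> b"
  shows "integrable (measure_pmf p) f"
proof -
  have ab: "\<bar>f x\<bar> \<le> max \<bar>a\<bar> \<bar>b\<bar>" for x using assms[of x] by (smt (verit))
  show ?thesis
    by (rule measure_pmf.integrable_const_bound[where B="max \<bar>a\<bar> \<bar>b\<bar>"]) (use ab in auto)
qed

lemma E_mono:
  fixes f g :: "'x \<Rightarrow> real"
  assumes "\<And>x. 0 \<le> f x" "\<And>x. f x \<le> g x" "\<And>x. g x \<le> 1"
  shows "measure_pmf.expectation p f \<le> measure_pmf.expectation p g"
proof (rule integral_mono)
  show "integrable (measure_pmf p) f" by (rule E_int[of 0 _ 1]) (use assms in \<open>auto intro: order_trans\<close>)
  show "integrable (measure_pmf p) g" by (rule E_int[of 0 _ 1]) (use assms in \<open>auto intro: order_trans\<close>)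
qed (use assms in auto)

lemma md_bounds: "d \<in> metric_dom \<Longrightarrow> 0 \<le> d t t' \<and> d t t' \<le> 1"
  by (simp add: metric_dom_def)

lemma md_nonproc: "d \<in> metric_dom \<Longrightarrow> \<not> (proc t \<and> proc t') \<Longrightarrow> d t t' = 0"
  by (simp add: metric_dom_def)

definition H :: "('y \<Rightarrow> 'y \<Rightarrow> real) \<Rightarrow> 'y set \<Rightarrow> 'y set \<Rightarrow> real" where
  "H dh P Q = sups ((\<lambda>p. infs ((\<lambda>q. dh p q) ` Q)) ` P)"

lemma hausdorff_H: "hausdorff dh P Q = max (H dh P Q) (H dh Q P)"
  by (simp add: hausdorff_def H_def)

lemma hausdorff_sym: "hausdorff dh P Q = hausdorff dh Q P"
  by (simp add: hausdorff_H max.commute)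

lemma infs_bounds:
  assumes "\<And>s. s \<in> S \<Longrightarrow> 0 \<le> s \<and> s \<le> 1"
  shows "0 \<le> infs S \<and> infs S \<le> 1"
proof (cases "S = {}")
  case True then show ?thesis by (simp add: infs_def)
next
  case False
  then obtain s where s: "s \<in> S" by auto
  have bb: "bdd_below S" using assms by (auto simp: bdd_below_def)
  have "Inf S \<le> s" by (rule cInf_lower[OF s bb])
  moreover have "0 \<le> Inf S" using False assms by (intro cInf_greatest) auto
  ultimately show ?thesis using False assms[OF s] by (simp add: infs_def)
qed

lemma sups_bounds:
  assumes "\<And>s. s \<in> S \<Longrightarrow> 0 \<le> s \<and> s \<le> 1"
  shows "0 \<le> sups S \<and> sups S \<le> 1"
proof (cases "S = {}")
  case True then show ?thesis by (simp add: sups_def)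
next
  case False
  then obtain s where s: "s \<in> S" by auto
  have bb: "bdd_above S" using assms by (auto simp: bdd_above_def)
  have "s \<le> Sup S" by (rule cSup_upper[OF s bb])
  moreover have "Sup S \<le> 1" using False assms by (intro cSup_least) auto
  ultimately show ?thesis using False assms[OF s] by (simp add: sups_def)
qed

lemma infs_lower: "s \<in> S \<Longrightarrow> (\<And>s. s \<in> S \<Longrightarrow> 0 \<le> s) \<Longrightarrow> infs S \<le> s"
  unfolding infs_def by (auto intro!: cInf_lower bdd_belowI[of _ 0])

lemma sups_upper: "s \<in> S \<Longrightarrow> (\<And>s. s \<in> S \<Longrightarrow> s \<le> 1) \<Longrightarrow> s \<le> sups S"
  unfolding sups_def by (auto intro!: cSup_upper bdd_aboveI[of _ 1])

lemma sups_least: "(\<And>s. s \<in> S \<Longrightarrow> s \<le> c) \<Longrightarrow> 0 \<le> c \<Longrightarrow> sups S \<le> c"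
  unfolding sups_def by (auto intro!: cSup_least)

lemma infs_greatest: "S \<noteq> {} \<Longrightarrow> (\<And>s. s \<in> S \<Longrightarrow> c \<le> s) \<Longrightarrow> c \<le> infs S"
  unfolding infs_def by (auto intro!: cInf_greatest)

lemma couplings_pair: "pair_pmf \<pi> \<pi>' \<in> couplings \<pi> \<pi>'"
  by (simp add: couplings_def map_fst_pair_pmf map_snd_pair_pmf)

lemma E_nonneg: "(\<And>x. 0 \<le> f x) \<Longrightarrow> 0 \<le> measure_pmf.expectation p (f :: _ \<Rightarrow> real)"
  by (rule Bochner_Integration.integral_nonneg) auto

lemma K_le:
  assumes "\<omega> \<in> couplings \<pi> \<pi>'" "\<And>x y. 0 \<le> d x y"
  shows "kantorovich d \<pi> \<pi>' \<le> measure_pmf.expectation \<omega> (\<lambda>(t, t'). d t t')"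
  unfolding kantorovich_def
  by (rule cInf_lower) (use assms in \<open>auto simp: bdd_below_def intro!: exI[of _ 0] E_nonneg split: prod.splits\<close>)

lemma K_bounds:
  assumes "\<And>x y. 0 \<le> d x y \<and> d x y \<le> 1"
  shows "0 \<le> kantorovich d \<pi> \<pi>' \<and> kantorovich d \<pi> \<pi>' \<le> 1"
proof
  show "0 \<le> kantorovich d \<pi> \<pi>'"
    unfolding kantorovich_def using couplings_pair[of \<pi> \<pi>']
    by (intro cInf_greatest) (auto intro!: E_nonneg split: prod.splits simp: assms)
  have "kantorovich d \<pi> \<pi>' \<le> measure_pmf.expectation (pair_pmf \<pi> \<pi>') (\<lambda>(t, t'). d t t')"
    by (rule K_le[OF couplings_pair]) (simp add: assms)
  also have "\<dots> \<le> 1" by (rule E_bounds(2)[of 0]) (auto split: prod.splits simp: assms)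
  finally show "kantorovich d \<pi> \<pi>' \<le> 1" .
qed

lemma K_mono:
  assumes "\<And>x y. 0 \<le> d1 x y" "\<And>x y. d1 x y \<le> d2 x y" "\<And>x y. d2 x y \<le> 1"
  shows "kantorovich d1 \<pi> \<pi>' \<le> kantorovich d2 \<pi> \<pi>'"
  unfolding kantorovich_def[of d2]
proof (rule cInf_greatest)
  show "(\<lambda>\<omega>. measure_pmf.expectation \<omega> (\<lambda>(t, t'). d2 t t')) ` couplings \<pi> \<pi>' \<noteq> {}"
    using couplings_pair by blast
next
  fix x assume "x \<in> (\<lambda>\<omega>. measure_pmf.expectation \<omega> (\<lambda>(t, t'). d2 t t')) ` couplings \<pi> \<pi>'"
  then obtain \<omega> where w: "\<omega> \<in> couplings \<pi> \<pi>'" and x: "x = measure_pmf.expectation \<omega> (\<lambda>(t, t'). d2 t t')" by auto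
  have "kantorovich d1 \<pi> \<pi>' \<le> measure_pmf.expectation \<omega> (\<lambda>(t, t'). d1 t t')"
    by (rule K_le[OF w assms(1)])
  also have "\<dots> \<le> x" unfolding x
    by (rule E_mono) (auto split: prod.splits simp: assms)
  finally show "kantorovich d1 \<pi> \<pi>' \<le> x" .
qed

lemma H_bounds:
  assumes "\<And>x y. 0 \<le> dh x y \<and> dh x y \<le> 1"
  shows "0 \<le> H dh P Q \<and> H dh P Q \<le> 1"
  unfolding H_def
  by (rule sups_bounds) (auto intro!: infs_bounds simp: assms)

lemma H_mono:
  assumes "\<And>x y. 0 \<le> dh1 x y" "\<And>x y. dh1 x y \<le> dh2 x y" "\<And>x y. dh2 x y \<le> 1"
  shows "H dh1 P Q \<le> H dh2 P Q"
proof -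
  have i: "infs ((\<lambda>q. dh1 p q) ` Q) \<le> infs ((\<lambda>q. dh2 p q) ` Q)" for p
  proof (cases "Q = {}")
    case True then show ?thesis by simp
  next
    case False
    show ?thesis
      by (rule infs_greatest) (use False in \<open>auto intro!: order_trans[OF infs_lower assms(2)] simp: assms(1)\<close>)
  qed
  have b2: "0 \<le> infs ((\<lambda>q. dh2 p q) ` Q) \<and> infs ((\<lambda>q. dh2 p q) ` Q) \<le> 1" for p
    by (rule infs_bounds) (auto intro: order_trans[OF assms(1) assms(2)] simp: assms(3))
  have s0: "0 \<le> sups ((\<lambda>p. infs ((\<lambda>q. dh2 p q) ` Q)) ` P)"
    using sups_bounds[of "(\<lambda>p. infs ((\<lambda>q. dh2 p q) ` Q)) ` P"] b2 by auto
  show ?thesis unfolding H_def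
  proof (rule sups_least[OF _ s0])
    fix s assume "s \<in> (\<lambda>p. infs ((\<lambda>q. dh1 p q) ` Q)) ` P"
    then obtain p where p: "p \<in> P" and s: "s = infs ((\<lambda>q. dh1 p q) ` Q)" by auto
    have "infs ((\<lambda>q. dh2 p q) ` Q) \<le> sups ((\<lambda>p. infs ((\<lambda>q. dh2 p q) ` Q)) ` P)"
      by (rule sups_upper) (use p b2 in auto)
    then show "s \<le> sups ((\<lambda>p. infs ((\<lambda>q. dh2 p q) ` Q)) ` P)" using i[of p] s by simp
  qed
qed

lemma hausdorff_bounds:
  assumes "\<And>x y. 0 \<le> dh x y \<and> dh x y \<le> 1"
  shows "0 \<le> hausdorff dh P Q \<and> hausdorff dh P Q \<le> 1"
proof -
  have "0 \<le> H dh P Q \<and> H dh P Q \<le> 1" by (rule H_bounds) (rule assms)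
  moreover have "0 \<le> H dh Q P \<and> H dh Q P \<le> 1" by (rule H_bounds) (rule assms)
  ultimately show ?thesis by (simp add: hausdorff_H le_max_iff_disj)
qed

lemma Bfun_md: assumes "d \<in> metric_dom" shows "Bfun d \<in> metric_dom"
proof -
  have K: "0 \<le> kantorovich d x y \<and> kantorovich d x y \<le> 1" for x y
    by (rule K_bounds) (simp add: md_bounds[OF assms])
  have hb: "0 \<le> hausdorff (kantorovich d) P Q \<and> hausdorff (kantorovich d) P Q \<le> 1" for P Q
    by (rule hausdorff_bounds) (simp add: K)
  show ?thesis unfolding metric_dom_def Bfun_def
    using sups_bounds[of "(\<lambda>a. hausdorff (kantorovich d) (der _ a) (der _ a)) ` UNIV"] hb
    by auto
qed

lemma Bfun_mono:
  assumes "d1 \<in> metric_dom" "d2 \<in> metric_dom" "\<And>x y. d1 x y \<le> d2 x y"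
  shows "Bfun d1 t t' \<le> Bfun d2 t t'"
proof -
  have K: "kantorovich d1 x y \<le> kantorovich d2 x y" for x y
    by (rule K_mono) (use md_bounds[OF assms(1)] md_bounds[OF assms(2)] assms(3) in auto)
  have Kb: "0 \<le> kantorovich d x y \<and> kantorovich d x y \<le> 1" if "d \<in> metric_dom" for d x y
    by (rule K_bounds) (simp add: md_bounds[OF that])
  have h: "hausdorff (kantorovich d1) P Q \<le> hausdorff (kantorovich d2) P Q" for P Q
    unfolding hausdorff_H
    using H_mono[of "kantorovich d1" "kantorovich d2" P Q] H_mono[of "kantorovich d1" "kantorovich d2" Q P]
      Kb[OF assms(1)] Kb[OF assms(2)] K by (auto simp: max_def)
  have hb: "0 \<le> hausdorff (kantorovich d2) P Q \<and> hausdorff (kantorovich d2) P Q \<le> 1" for P Q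
    by (rule hausdorff_bounds) (simp add: Kb[OF assms(2)])
  have hb1: "0 \<le> hausdorff (kantorovich d1) P Q" for P Q
    using hausdorff_bounds[of "kantorovich d1" P Q] Kb[OF assms(1)] by auto
  have s0: "0 \<le> sups (range (\<lambda>a. hausdorff (kantorovich d2) (der t a) (der t' a)))"
    using sups_bounds[of "range (\<lambda>a. hausdorff (kantorovich d2) (der t a) (der t' a))"] hb by auto
  show ?thesis unfolding Bfun_def
    by (auto intro!: sups_least order_trans[OF h sups_upper] simp: hb hb1 s0)
qed

lemma Bfun_sym: "Bfun d t t' = Bfun d t' t"
  unfolding Bfun_def by (auto simp: hausdorff_sym conj_commute)

definition PF :: "(('a, 'v) pterm \<Rightarrow> ('a, 'v) pterm \<Rightarrow> real) set" where
  "PF = {d \<in> metric_dom. \<forall>t t'. Bfun d t t' \<le> d t t'}"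

definition Lfp :: "('a, 'v) pterm \<Rightarrow> ('a, 'v) pterm \<Rightarrow> real" where
  "Lfp t t' = Inf ((\<lambda>d. d t t') ` PF)"

definition dtop :: "('a, 'v) pterm \<Rightarrow> ('a, 'v) pterm \<Rightarrow> real" where
  "dtop t t' = (if proc t \<and> proc t' then 1 else 0)"

lemma dtop_PF: "dtop \<in> PF"
  unfolding PF_def
proof (intro CollectI conjI allI)
  show md: "dtop \<in> metric_dom" by (simp add: metric_dom_def dtop_def)
  fix t t'
  show "Bfun dtop t t' \<le> dtop t t'"
    using md_bounds[OF Bfun_md[OF md], of t t']
      md_nonproc[OF Bfun_md[OF md], of t t']
    by (auto simp: dtop_def)
qed

lemma Lfp_le: "d \<in> PF \<Longrightarrow> Lfp t t' \<le> d t t'"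
  unfolding Lfp_def by (rule cInf_lower) (auto simp: bdd_below_def PF_def metric_dom_def intro!: exI[of _ 0])

lemma Lfp_md: "Lfp \<in> metric_dom"
proof -
  have ge: "0 \<le> Lfp t t'" for t t'
    unfolding Lfp_def using dtop_PF by (intro cInf_greatest) (auto simp: PF_def metric_dom_def)
  have le: "Lfp t t' \<le> dtop t t'" for t t' by (rule Lfp_le[OF dtop_PF])
  show ?thesis unfolding metric_dom_def
  proof (intro CollectI allI conjI impI)
    fix t t'
    show "0 \<le> Lfp t t'" by (rule ge)
    show "Lfp t t' \<le> 1" using le[of t t'] by (simp add: dtop_def split: if_splits)
    assume "\<not> (proc t \<and> proc t')"
    then show "Lfp t t' = 0" using le[of t t'] ge[of t t'] by (auto simp: dtop_def split: if_splits)
  qed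
qed

lemma Lfp_pre: "Bfun Lfp t t' \<le> Lfp t t'"
proof -
  have "Bfun Lfp t t' \<le> d t t'" if "d \<in> PF" for d
  proof -
    have "Bfun Lfp t t' \<le> Bfun d t t'"
      by (rule Bfun_mono[OF Lfp_md]) (use that Lfp_le in \<open>auto simp: PF_def\<close>)
    also have "\<dots> \<le> d t t'" using that by (simp add: PF_def)
    finally show ?thesis .
  qed
  then show ?thesis unfolding Lfp_def using dtop_PF by (intro cInf_greatest) auto
qed

lemma Lfp_fix: "Bfun Lfp = Lfp"
proof -
  have "Bfun Lfp \<in> PF"
    unfolding PF_def using Bfun_md[OF Lfp_md] Bfun_mono[OF Bfun_md[OF Lfp_md] Lfp_md Lfp_pre] by blast
  then have "Lfp t t' \<le> Bfun Lfp t t'" for t t' by (rule Lfp_le)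
  then show ?thesis using Lfp_pre by (intro ext antisym) auto
qed

lemma bisim_eq: "bisim_metric = Lfp"
  unfolding bisim_metric_def
proof (rule the_equality)
  show "Lfp \<in> metric_dom \<and> Bfun Lfp = Lfp \<and> (\<forall>d'\<in>metric_dom. Bfun d' = d' \<longrightarrow> Lfp \<le> d')"
  proof (intro conjI ballI impI Lfp_md Lfp_fix)
    fix d' assume "d' \<in> metric_dom" "Bfun d' = d'"
    then have "d' \<in> PF" by (simp add: PF_def)
    then show "Lfp \<le> d'" by (auto simp: le_fun_def intro: Lfp_le)
  qed
next
  fix d assume d: "d \<in> metric_dom \<and> Bfun d = d \<and> (\<forall>d'\<in>metric_dom. Bfun d' = d' \<longrightarrow> d \<le> d')"
  then have "d \<le> Lfp" using Lfp_md Lfp_fix by auto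
  moreover have "Lfp \<le> d" using d Lfp_le[of d] by (auto simp: PF_def le_fun_def)
  ultimately show "d = Lfp" by (rule antisym)
qed

lemma bm_md: "bisim_metric \<in> metric_dom"
  by (simp add: bisim_eq Lfp_md)

lemma bm_fix: "Bfun bisim_metric = bisim_metric"
  by (simp add: bisim_eq Lfp_fix)

lemma bm_least: "d \<in> metric_dom \<Longrightarrow> (\<And>t t'. Bfun d t t' \<le> d t t') \<Longrightarrow> bisim_metric t t' \<le> d t t'"
  by (simp add: bisim_eq Lfp_le PF_def)

lemma bm_sym: "bisim_metric t t' = bisim_metric t' t"
  by (metis bm_fix Bfun_sym)

lemma bm_bounds: "0 \<le> bisim_metric t t' \<and> bisim_metric t t' \<le> 1"
  by (rule md_bounds[OF bm_md])



definition mixwf :: "(real \<times> 'x pmf) list \<Rightarrow> bool" where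
  "mixwf l \<longleftrightarrow> (\<forall>z\<in>set l. 0 \<le> fst z) \<and> sum_list (map fst l) = 1"

lemma sum_filter_id:
  fixes g :: "'x \<Rightarrow> 'b::comm_semiring_1" and w :: "real \<Rightarrow> 'b"
  assumes "finite A" "fst ` set L \<subseteq> A"
  shows "(\<Sum>a\<in>A. g a * sum_list (map (\<lambda>z. w (snd z)) (filter (\<lambda>z. fst z = a) L)))
       = sum_list (map (\<lambda>z. g (fst z) * w (snd z)) L)"
  using assms(2)
proof (induction L)
  case Nil then show ?case by simp
next
  case (Cons z L)
  have "(\<Sum>a\<in>A. g a * sum_list (map (\<lambda>z. w (snd z)) (filter (\<lambda>z. fst z = a) (z # L))))
      = (\<Sum>a\<in>A. (if a = fst z then g a * w (snd z) else 0)
           + g a * sum_list (map (\<lambda>z. w (snd z)) (filter (\<lambda>z. fst z = a) L)))"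
    by (intro sum.cong refl) (auto simp: distrib_left)
  also have "\<dots> = g (fst z) * w (snd z)
      + (\<Sum>a\<in>A. g a * sum_list (map (\<lambda>z. w (snd z)) (filter (\<lambda>z. fst z = a) L)))"
    using Cons.prems assms(1) by (simp add: sum.distrib)
  finally show ?case using Cons by simp
qed

lemma ennreal_sum_list:
  assumes "\<And>x. x \<in> set xs \<Longrightarrow> 0 \<le> f x"
  shows "ennreal (sum_list (map f xs)) = sum_list (map (\<lambda>x. ennreal (f x)) xs)"
  using assms
proof (induction xs)
  case (Cons a xs)
  have "0 \<le> f a" "0 \<le> sum_list (map f xs)" using Cons.prems by (auto intro!: sum_list_nonneg)
  then show ?case using Cons by (simp add: ennreal_plus)
qed simp

lemma mix_nn:
  assumes "mixwf l"
  shows "(\<integral>\<^sup>+x. f x \<partial>mix l) = sum_list (map (\<lambda>z. ennreal (fst z) * (\<integral>\<^sup>+x. f x \<partial>measure_pmf (snd z))) l)"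
proof -
  define L where "L = map (\<lambda>(q, p). (p, q)) l"
  have wf: "pmf_of_list_wf L" using assms unfolding L_def mixwf_def pmf_of_list_wf_def
    by (auto simp: o_def case_prod_beta)
  have Lnn: "z \<in> set L \<Longrightarrow> 0 \<le> snd z" for z using wf by (auto simp: pmf_of_list_wf_def)
  have "(\<integral>\<^sup>+x. f x \<partial>mix l) = (\<integral>\<^sup>+p. (\<integral>\<^sup>+x. f x \<partial>measure_pmf p) \<partial>measure_pmf (pmf_of_list L))"
    unfolding mix_def L_def by simp
  also have "\<dots> = (\<Sum>p\<in>set (map fst L). (\<integral>\<^sup>+x. f x \<partial>measure_pmf p) * ennreal (pmf (pmf_of_list L) p))"
    by (rule nn_integral_measure_pmf_support) (use set_pmf_of_list[OF wf] in auto)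
  also have "\<dots> = (\<Sum>p\<in>set (map fst L). (\<integral>\<^sup>+x. f x \<partial>measure_pmf p) *
                  sum_list (map (\<lambda>z. ennreal (snd z)) (filter (\<lambda>z. fst z = p) L)))"
  proof (intro sum.cong refl arg_cong2[where f="(*)"])
    fix p
    show "ennreal (pmf (pmf_of_list L) p) = sum_list (map (\<lambda>z. ennreal (snd z)) (filter (\<lambda>z. fst z = p) L))"
      unfolding pmf_pmf_of_list[OF wf] by (rule ennreal_sum_list) (auto intro: Lnn)
  qed
  also have "\<dots> = sum_list (map (\<lambda>z. (\<integral>\<^sup>+x. f x \<partial>measure_pmf (fst z)) * ennreal (snd z)) L)"
    by (rule sum_filter_id) auto
  also have "\<dots> = sum_list (map (\<lambda>z. ennreal (fst z) * (\<integral>\<^sup>+x. f x \<partial>measure_pmf (snd z))) l)"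
    by (simp add: L_def o_def case_prod_beta mult.commute)
  finally show ?thesis .
qed

lemma nn_E:
  fixes f :: "'x \<Rightarrow> real"
  assumes "\<And>x. 0 \<le> f x" "\<And>x. f x \<le> B"
  shows "(\<integral>\<^sup>+x. ennreal (f x) \<partial>measure_pmf p) = ennreal (measure_pmf.expectation p f)"
  by (rule nn_integral_eq_integral) (use E_int[of 0 f B] assms in auto)

lemma mix_E:
  fixes f :: "'x \<Rightarrow> real"
  assumes "mixwf l" "\<And>x. 0 \<le> f x" "\<And>x. f x \<le> B"
  shows "measure_pmf.expectation (mix l) f = sum_list (map (\<lambda>z. fst z * measure_pmf.expectation (snd z) f) l)"
proof -
  have nn: "0 \<le> measure_pmf.expectation p f" for p by (rule E_nonneg) (rule assms)
  have "ennreal (measure_pmf.expectation (mix l) f) = (\<integral>\<^sup>+x. ennreal (f x) \<partial>mix l)"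
    by (rule nn_E[symmetric]) (use assms in auto)
  also have "\<dots> = sum_list (map (\<lambda>z. ennreal (fst z) * ennreal (measure_pmf.expectation (snd z) f)) l)"
    by (subst mix_nn[OF assms(1)]) (simp add: nn_E[OF assms(2,3)])
  also have "\<dots> = ennreal (sum_list (map (\<lambda>z. fst z * measure_pmf.expectation (snd z) f) l))"
  proof -
    have "ennreal (sum_list (map (\<lambda>z. fst z * measure_pmf.expectation (snd z) f) l))
        = sum_list (map (\<lambda>z. ennreal (fst z * measure_pmf.expectation (snd z) f)) l)"
      by (rule ennreal_sum_list, rule mult_nonneg_nonneg) (use assms(1) nn in \<open>auto simp: mixwf_def\<close>)
    also have "\<dots> = sum_list (map (\<lambda>z. ennreal (fst z) * ennreal (measure_pmf.expectation (snd z) f)) l)"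
      by (rule arg_cong[where f=sum_list], rule map_cong) (use assms(1) nn in \<open>auto simp: mixwf_def ennreal_mult\<close>)
    finally show ?thesis by simp
  qed
  finally show ?thesis
  proof (subst (asm) ennreal_inj)
    show "0 \<le> measure_pmf.expectation (mix l) f" by (rule nn)
    show "0 \<le> (\<Sum>z\<leftarrow>l. fst z * measure_pmf.expectation (snd z) f)"
      by (rule sum_list_nonneg) (use assms(1) nn in \<open>auto simp: mixwf_def intro!: mult_nonneg_nonneg\<close>)
  qed
qed

lemma pmf_eq_nn:
  assumes "\<And>x. (\<integral>\<^sup>+y. indicator {x} y \<partial>measure_pmf M) = (\<integral>\<^sup>+y. indicator {x} y \<partial>measure_pmf N)"
  shows "M = N"
proof (rule pmf_eqI)
  fix x
  have "ennreal (pmf M x) = ennreal (pmf N x)"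
    using assms[of x] by (simp add: emeasure_pmf_single)
  then show "pmf M x = pmf N x" by (simp add: pmf_nonneg)
qed

lemma mixwf_map: "mixwf l \<Longrightarrow> mixwf (map (\<lambda>z. (fst z, g (snd z))) l)"
  by (simp add: mixwf_def o_def)

lemma map_mix:
  assumes "mixwf l"
  shows "map_pmf g (mix l) = mix (map (\<lambda>z. (fst z, map_pmf g (snd z))) l)"
proof -
  have "(\<integral>\<^sup>+y. f y \<partial>measure_pmf (map_pmf g (mix l))) = (\<integral>\<^sup>+y. f y \<partial>measure_pmf (mix (map (\<lambda>z. (fst z, map_pmf g (snd z))) l)))" for f
    by (simp only: nn_integral_map_pmf mix_nn[OF assms] mix_nn[OF mixwf_map[OF assms]]) (simp add: o_def)
  then show ?thesis by (intro pmf_eq_nn) blast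
qed

lemma set_pmf_mix:
  assumes "mixwf l"
  shows "set_pmf (mix l) \<subseteq> (\<Union>z\<in>set l. set_pmf (snd z))"
proof -
  define L where "L = map (\<lambda>(q, p). (p, q)) l"
  have wf: "pmf_of_list_wf L" using assms unfolding L_def mixwf_def pmf_of_list_wf_def
    by (auto simp: o_def case_prod_beta)
  show ?thesis
  proof
    fix x assume "x \<in> set_pmf (mix l)"
    then obtain p where p: "p \<in> set_pmf (pmf_of_list L)" "x \<in> set_pmf p"
      unfolding mix_def L_def by auto
    then have "p \<in> set (map fst L)" using set_pmf_of_list[OF wf] by auto
    then obtain z where "z \<in> set l" "snd z = p" by (auto simp: L_def case_prod_beta)
    then show "x \<in> (\<Union>z\<in>set l. set_pmf (snd z))" using p by auto
  qed
qed

lemma pm_le_refl: "p \<sqsubseteq>\<^sub>m p"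
proof -
  define \<omega> where "\<omega> = map_pmf (\<lambda>m. (m, m)) p"
  have c: "\<omega> \<in> couplings p p" by (simp add: couplings_def \<omega>_def pmf.map_comp o_def)
  have pw: "pmf \<omega> (m', m) = (if m' = m then pmf p m else 0)" for m' m
  proof (cases "m' = m")
    case True
    then show ?thesis unfolding \<omega>_def using pmf_map_inj'[of "\<lambda>m. (m, m)" p m] by (simp add: inj_on_def)
  next
    case False
    then show ?thesis unfolding \<omega>_def by (subst pmf_map_outside) auto
  qed
  have w: "weighting \<omega> m x \<le> ennreal_of_enat (m x)" for m x
  proof -
    have e1: "(\<lambda>m'. ennreal (pmf \<omega> (m', m))) = (\<lambda>m'. ennreal (pmf p m) * indicator {m} m')"
      by (auto simp: pw split: split_indicator)
    have e2: "(\<lambda>m'. ennreal (pmf \<omega> (m', m)) * ennreal_of_enat (m' x))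
            = (\<lambda>m'. (ennreal (pmf p m) * ennreal_of_enat (m x)) * indicator {m} m')"
      by (auto simp: pw split: split_indicator)
    have i1: "(\<integral>\<^sup>+ m'. ennreal (pmf \<omega> (m', m)) \<partial>count_space UNIV) = ennreal (pmf p m)"
      unfolding e1 by (subst nn_integral_cmult_indicator) auto
    have i2: "(\<integral>\<^sup>+ m'. ennreal (pmf \<omega> (m', m)) * ennreal_of_enat (m' x) \<partial>count_space UNIV)
              = ennreal (pmf p m) * ennreal_of_enat (m x)"
      unfolding e2 by (subst nn_integral_cmult_indicator) auto
    show ?thesis
    proof (cases "ennreal (pmf p m) > 0")
      case True
      then have "ennreal (pmf p m) \<noteq> 0" by auto
      then show ?thesis unfolding weighting_def Let_def i1 i2 using True
        by (simp add: mult.commute[of "ennreal (pmf p m)"] ennreal_mult_divide_eq)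
    next
      case False
      then show ?thesis unfolding weighting_def Let_def i1 i2 by simp
    qed
  qed
  show ?thesis unfolding pm_le_def using c w by blast
qed

lemma E_one_minus:
  fixes f :: "'x \<Rightarrow> real"
  assumes "\<And>x. 0 \<le> f x" "\<And>x. f x \<le> 1"
  shows "measure_pmf.expectation p (\<lambda>x. 1 - f x) = 1 - measure_pmf.expectation p f"
  using E_int[of 0 f 1, OF assms] by (subst Bochner_Integration.integral_diff) auto

lemma E_pair_prod:
  fixes f h :: "'x \<Rightarrow> real"
  assumes "\<And>x. 0 \<le> f x" "\<And>x. f x \<le> 1" "\<And>x. 0 \<le> h x" "\<And>x. h x \<le> 1"
  shows "measure_pmf.expectation (pair_pmf p q) (\<lambda>z. f (fst z) * h (snd z))
         = measure_pmf.expectation p f * measure_pmf.expectation q h"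
proof -
  have nnp: "0 \<le> measure_pmf.expectation p f" by (rule E_nonneg) (rule assms)
  have nnq: "0 \<le> measure_pmf.expectation q h" by (rule E_nonneg) (rule assms)
  have "ennreal (measure_pmf.expectation (pair_pmf p q) (\<lambda>z. f (fst z) * h (snd z)))
        = (\<integral>\<^sup>+z. ennreal (f (fst z) * h (snd z)) \<partial>pair_pmf p q)"
    by (rule nn_E[symmetric, where B=1]) (use assms in \<open>auto intro: mult_le_one\<close>)
  also have "\<dots> = (\<integral>\<^sup>+a. \<integral>\<^sup>+b. ennreal (f a) * ennreal (h b) \<partial>q \<partial>p)"
    by (simp add: nn_integral_pair_pmf' ennreal_mult assms)
  also have "\<dots> = (\<integral>\<^sup>+a. ennreal (f a) * (\<integral>\<^sup>+b. ennreal (h b) \<partial>q) \<partial>p)"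
    by (simp add: nn_integral_cmult)
  also have "\<dots> = (\<integral>\<^sup>+a. ennreal (f a) \<partial>p) * (\<integral>\<^sup>+b. ennreal (h b) \<partial>q)"
    by (simp add: nn_integral_multc)
  also have "\<dots> = ennreal (measure_pmf.expectation p f * measure_pmf.expectation q h)"
    using nn_E[of f 1 p] nn_E[of h 1 q] assms nnp nnq by (simp add: ennreal_mult)
  finally show ?thesis
    using nnp nnq by (subst (asm) ennreal_inj) (auto intro!: E_nonneg mult_nonneg_nonneg assms)
qed



lemma epow_bounds: "0 \<le> c \<Longrightarrow> c \<le> 1 \<Longrightarrow> 0 \<le> epow c n \<and> epow c n \<le> 1"
  by (cases n) (auto simp: epow_def power_le_one)

lemma epow_add: "epow c (a + b) = epow c a * epow c b"
  by (cases a; cases b) (auto simp: epow_def power_add)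

lemma epow_0: "epow c 0 = 1" by (simp add: epow_def zero_enat_def)
lemma epow_1: "epow c 1 = c" by (simp add: epow_def one_enat_def)

definition gprod :: "'v set \<Rightarrow> 'v mult \<Rightarrow> ('v \<Rightarrow> real) \<Rightarrow> real" where
  "gprod V m e = (\<Prod>x\<in>V. epow (1 - e x) (m x))"

definition ebnd :: "('v \<Rightarrow> real) \<Rightarrow> bool" where
  "ebnd e \<longleftrightarrow> (\<forall>x. 0 \<le> e x \<and> e x \<le> 1)"

lemma fb: "ebnd e \<Longrightarrow> 0 \<le> epow (1 - e x) n \<and> epow (1 - e x) n \<le> 1"
  by (rule epow_bounds) (auto simp: ebnd_def)

lemma gprod_bounds: "ebnd e \<Longrightarrow> 0 \<le> gprod V m e \<and> gprod V m e \<le> 1"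
  using fb[of e] unfolding gprod_def by (auto intro!: prod_nonneg prod_le_1)

lemma gprod_plus: "gprod V (\<lambda>x. m1 x + m2 x) e = gprod V m1 e * gprod V m2 e"
  by (simp add: gprod_def epow_add prod.distrib)

lemma dda_support:
  assumes "finite V" "\<And>x. x \<notin> V \<Longrightarrow> m x = 0" "ebnd e"
  shows "dda m e = 1 - gprod V m e"
proof -
  define f where "f = (\<lambda>x. epow (1 - e x) (m x))"
  have fbd: "0 \<le> f x \<and> f x \<le> 1" for x unfolding f_def by (rule fb[OF assms(3)])
  have "Inf ((\<lambda>F. \<Prod>x\<in>F. f x) ` {F. finite F}) = prod f V"
  proof (rule cInf_eq_minimum)
    show "prod f V \<in> (\<lambda>F. \<Prod>x\<in>F. f x) ` {F. finite F}" using assms(1) by auto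
    fix y assume "y \<in> (\<lambda>F. \<Prod>x\<in>F. f x) ` {F. finite F}"
    then obtain F where F: "finite F" and y: "y = prod f F" by auto
    have "prod f F = prod f (F \<inter> V) * prod f (F - V)" by (rule prod.Int_Diff[OF F])
    also have "prod f (F - V) = 1" using assms(2) by (intro prod.neutral) (simp add: f_def epow_0)
    finally have y1: "y = prod f (V \<inter> F)" using y by (simp add: Int_commute)
    have "prod f V = prod f (V \<inter> F) * prod f (V - F)" by (rule prod.Int_Diff[OF assms(1)])
    also have "\<dots> \<le> prod f (V \<inter> F) * 1"
      using fbd by (intro mult_left_mono prod_le_1 prod_nonneg) auto
    finally show "prod f V \<le> y" using y1 by simp
  qed
  then show ?thesis by (simp add: dda_def gprod_def f_def)
qed

lemma dda_bounds: assumes "ebnd e" shows "0 \<le> dda m e \<and> dda m e \<le> 1"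
proof -
  define S where "S = (\<lambda>F. \<Prod>x\<in>F. epow (1 - e x) (m x)) ` {F. finite F}"
  have Sb: "s \<in> S \<Longrightarrow> 0 \<le> s \<and> s \<le> 1" for s
    using fb[OF assms] unfolding S_def by (auto intro!: prod_nonneg prod_le_1)
  have one: "1 \<in> S" unfolding S_def by (auto intro!: image_eqI[of _ _ "{}"])
  have "Inf S \<le> 1" by (rule cInf_lower[OF one]) (use Sb in \<open>auto intro!: bdd_belowI[of _ 0]\<close>)
  moreover have "0 \<le> Inf S" using one Sb by (intro cInf_greatest) auto
  ultimately show ?thesis by (simp add: dda_def S_def)
qed

lemma pda_bounds: "ebnd e \<Longrightarrow> 0 \<le> pda p e \<and> pda p e \<le> 1"
  unfolding pda_def using dda_bounds[of e] E_bounds[of 0 "\<lambda>m. dda m e" 1 p] by auto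

lemma da_ge: "ebnd e \<Longrightarrow> p \<in> P \<Longrightarrow> pda p e \<le> da P e"
  unfolding da_def by (rule cSup_upper) (use pda_bounds in \<open>auto intro!: bdd_aboveI[of _ 1]\<close>)

definition goodV :: "'v mult pmf \<Rightarrow> 'v set \<Rightarrow> bool" where
  "goodV p V \<longleftrightarrow> (\<forall>m\<in>set_pmf p. \<forall>x. x \<notin> V \<longrightarrow> m x = 0)"

lemma goodV_mono: "goodV p V \<Longrightarrow> V \<subseteq> W \<Longrightarrow> goodV p W"
  by (auto simp: goodV_def)

lemma pda_support:
  assumes "finite V" "goodV p V" "ebnd e"
  shows "pda p e = 1 - measure_pmf.expectation p (\<lambda>m. gprod V m e)"
proof -
  have "pda p e = measure_pmf.expectation p (\<lambda>m. 1 - gprod V m e)"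
    unfolding pda_def
    by (rule integral_cong_AE) (use assms in \<open>auto simp: AE_measure_pmf_iff goodV_def intro!: dda_support\<close>)
  also have "\<dots> = 1 - measure_pmf.expectation p (\<lambda>m. gprod V m e)"
    by (rule E_one_minus) (use gprod_bounds[OF assms(3)] in auto)
  finally show ?thesis .
qed

lemma pda_zero: "ebnd e \<Longrightarrow> pda (return_pmf (\<lambda>_. 0)) e = 0"
  unfolding pda_def by (simp add: dda_support[of "{}"] gprod_def)

lemma pda_var: "ebnd e \<Longrightarrow> pda (return_pmf (one_var x)) e = e x"
proof -
  assume e: "ebnd e"
  have "dda (one_var x) e = 1 - gprod {x} (one_var x) e"
    by (rule dda_support) (use e in \<open>auto simp: one_var_def\<close>)
  then show ?thesis unfolding pda_def by (simp add: gprod_def one_var_def epow_1)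
qed

lemma goodV_zero: "goodV (return_pmf (\<lambda>_. 0)) {}" by (simp add: goodV_def)
lemma goodV_var: "goodV (return_pmf (one_var x)) {x}" by (simp add: goodV_def one_var_def)

definition parp :: "'v mult pmf \<Rightarrow> 'v mult pmf \<Rightarrow> 'v mult pmf" where
  "parp p1 p2 = map_pmf (\<lambda>(m1, m2). \<lambda>x. m1 x + m2 x) (pair_pmf p1 p2)"

lemma goodV_par: "goodV p1 V \<Longrightarrow> goodV p2 V \<Longrightarrow> goodV (parp p1 p2) V"
  by (auto simp: goodV_def parp_def)

lemma pda_par:
  assumes "finite V" "goodV p1 V" "goodV p2 V" "ebnd e"
  shows "pda (parp p1 p2) e = 1 - (1 - pda p1 e) * (1 - pda p2 e)"
proof -
  have gb: "0 \<le> gprod V m e \<and> gprod V m e \<le> 1" for m by (rule gprod_bounds[OF assms(4)])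
  have "pda (parp p1 p2) e = 1 - measure_pmf.expectation (parp p1 p2) (\<lambda>m. gprod V m e)"
    by (rule pda_support[OF assms(1) goodV_par[OF assms(2,3)] assms(4)])
  also have "measure_pmf.expectation (parp p1 p2) (\<lambda>m. gprod V m e)
      = measure_pmf.expectation (pair_pmf p1 p2) (\<lambda>z. gprod V (fst z) e * gprod V (snd z) e)"
    by (simp add: parp_def case_prod_beta gprod_plus)
  also have "\<dots> = measure_pmf.expectation p1 (\<lambda>m. gprod V m e) * measure_pmf.expectation p2 (\<lambda>m. gprod V m e)"
    by (rule E_pair_prod) (use gb in auto)
  also have "measure_pmf.expectation p1 (\<lambda>m. gprod V m e) = 1 - pda p1 e"
    using pda_support[OF assms(1,2,4)] by simp
  also have "measure_pmf.expectation p2 (\<lambda>m. gprod V m e) = 1 - pda p2 e"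
    using pda_support[OF assms(1,3,4)] by simp
  finally show ?thesis .
qed

lemma pda_mix: "mixwf l \<Longrightarrow> ebnd e \<Longrightarrow> pda (mix l) e = sum_list (map (\<lambda>z. fst z * pda (snd z) e) l)"
  unfolding pda_def by (rule mix_E[where B=1]) (use dda_bounds in auto)

lemma goodV_mix: "mixwf l \<Longrightarrow> (\<And>z. z \<in> set l \<Longrightarrow> goodV (snd z) V) \<Longrightarrow> goodV (mix l) V"
  using set_pmf_mix[of l] unfolding goodV_def by blast



inductive_cases trans_nil: "trans PNil a \<pi>"
inductive_cases trans_pref: "trans (Pref b qs) a \<pi>"
inductive_cases trans_plus: "trans (Plus t1 t2) a \<pi>"
inductive_cases trans_par: "trans (Par B t1 t2) a \<pi>"

lemma der_nil: "der PNil a = {}" by (auto simp: der_def elim: trans_nil)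

lemma der_pref: "der (Pref b qs) a = (if a = b then {mix (map (\<lambda>(q, u). (q, return_pmf u)) qs)} else {})"
  by (auto simp: der_def elim: trans_pref intro: trans.pref)

lemma der_plus: "der (Plus t1 t2) a = der t1 a \<union> der t2 a"
  by (auto simp: der_def elim: trans_plus intro: trans.plus1 trans.plus2)

lemma trans_par_inv:
  assumes "trans (Par B t1 t2) a \<pi>"
  shows "(\<exists>\<pi>1 \<pi>2. a \<in> B \<and> trans t1 a \<pi>1 \<and> trans t2 a \<pi>2 \<and> \<pi> = map_pmf (\<lambda>(x, y). Par B x y) (pair_pmf \<pi>1 \<pi>2))
       \<or> (\<exists>\<pi>1. a \<notin> B \<and> trans t1 a \<pi>1 \<and> \<pi> = map_pmf (\<lambda>x. Par B x t2) \<pi>1)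
       \<or> (\<exists>\<pi>2. a \<notin> B \<and> trans t2 a \<pi>2 \<and> \<pi> = map_pmf (\<lambda>y. Par B t1 y) \<pi>2)"
  using assms by (rule trans_par) blast+

lemma proc_plus: "proc (Plus t1 t2) \<longleftrightarrow> proc t1 \<and> proc t2" by (auto simp: proc_def)
lemma proc_par: "proc (Par B t1 t2) \<longleftrightarrow> proc t1 \<and> proc t2" by (auto simp: proc_def)

lemma Kbm: "0 \<le> kantorovich bisim_metric x y \<and> kantorovich bisim_metric x y \<le> 1"
  by (rule K_bounds) (simp add: bm_bounds)

lemma hbm: "0 \<le> hausdorff (kantorovich bisim_metric) P Q \<and> hausdorff (kantorovich bisim_metric) P Q \<le> 1"
  by (rule hausdorff_bounds) (simp add: Kbm)

lemma bm_ge_H: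
  assumes "proc t" "proc t'"
  shows "hausdorff (kantorovich bisim_metric) (der t a) (der t' a) \<le> bisim_metric t t'"
proof -
  have "hausdorff (kantorovich bisim_metric) (der t a) (der t' a) \<le> Bfun bisim_metric t t'"
    unfolding Bfun_def using assms by (auto intro!: sups_upper simp: hbm)
  then show ?thesis by (simp add: bm_fix)
qed

lemma bm_via_H:
  assumes "\<And>a. hausdorff (kantorovich bisim_metric) (der t a) (der t' a) \<le> c" "0 \<le> c"
  shows "bisim_metric t t' \<le> c"
proof -
  have "Bfun bisim_metric t t' \<le> c" unfolding Bfun_def using assms by (auto intro!: sups_least)
  then show ?thesis by (simp add: bm_fix)
qed

lemma hausdorff_single: "hausdorff dh {x} {y} = max (dh x y) (dh y x)"
  by (simp add: hausdorff_H H_def infs_def sups_def)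

lemma hausdorff_empty: "hausdorff dh {} {} = 0"
  by (simp add: hausdorff_H H_def sups_def)

lemma bm_nil: "bisim_metric PNil PNil \<le> 0"
  by (rule bm_via_H) (simp_all add: der_nil hausdorff_empty)

section \<open>Prefix\<close>

definition wl :: "(real \<times> 'b) list \<Rightarrow> bool" where
  "wl l \<longleftrightarrow> (\<forall>z\<in>set l. 0 \<le> fst z) \<and> sum_list (map fst l) = 1"

lemma mixwf_gen: "wl l \<Longrightarrow> mixwf (map (\<lambda>z. (fst z, g z)) l)"
  by (simp add: wl_def mixwf_def o_def)

lemma K_mixret:
  assumes d: "\<And>x y. 0 \<le> d x y \<and> d x y \<le> 1" and w: "wl l"
  shows "kantorovich d (mix (map (\<lambda>z. (fst z, return_pmf (fst (snd z)))) l))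
                       (mix (map (\<lambda>z. (fst z, return_pmf (snd (snd z)))) l))
         \<le> sum_list (map (\<lambda>z. fst z * d (fst (snd z)) (snd (snd z))) l)"
proof -
  define \<omega> where "\<omega> = mix (map (\<lambda>z. (fst z, return_pmf (snd z))) l)"
  have c: "\<omega> \<in> couplings (mix (map (\<lambda>z. (fst z, return_pmf (fst (snd z)))) l))
                       (mix (map (\<lambda>z. (fst z, return_pmf (snd (snd z)))) l))"
    unfolding couplings_def \<omega>_def
    by (simp add: map_mix[OF mixwf_gen[OF w]] o_def)
  have "kantorovich d (mix (map (\<lambda>z. (fst z, return_pmf (fst (snd z)))) l))
                       (mix (map (\<lambda>z. (fst z, return_pmf (snd (snd z)))) l))
        \<le> measure_pmf.expectation \<omega> (\<lambda>(t, t'). d t t')"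
    by (rule K_le[OF c]) (use d in auto)
  also have "\<dots> = sum_list (map (\<lambda>z. fst z * d (fst (snd z)) (snd (snd z))) l)"
    unfolding \<omega>_def
    by (subst mix_E[OF mixwf_gen[OF w], where B=1]) (use d in \<open>auto simp: o_def case_prod_beta\<close>)
  finally show ?thesis .
qed

lemma bm_pref:
  assumes w: "wl l"
  shows "bisim_metric (Pref a (map (\<lambda>z. (fst z, fst (snd z))) l)) (Pref a (map (\<lambda>z. (fst z, snd (snd z))) l))
         \<le> sum_list (map (\<lambda>z. fst z * bisim_metric (fst (snd z)) (snd (snd z))) l)"
proof (rule bm_via_H)
  have nn: "0 \<le> sum_list (map (\<lambda>z. fst z * bisim_metric (fst (snd z)) (snd (snd z))) l)"
  proof (rule sum_list_nonneg)
    fix x assume "x \<in> set (map (\<lambda>z. fst z * bisim_metric (fst (snd z)) (snd (snd z))) l)"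
    then obtain z where z: "z \<in> set l" "x = fst z * bisim_metric (fst (snd z)) (snd (snd z))" by auto
    have "0 \<le> fst z" using w z(1) by (simp add: wl_def)
    then show "0 \<le> x" using z(2) bm_bounds[of "fst (snd z)" "snd (snd z)"] by simp
  qed
  then show "0 \<le> sum_list (map (\<lambda>z. fst z * bisim_metric (fst (snd z)) (snd (snd z))) l)" .
  fix b
  show "hausdorff (kantorovich bisim_metric) (der (Pref a (map (\<lambda>z. (fst z, fst (snd z))) l)) b)
          (der (Pref a (map (\<lambda>z. (fst z, snd (snd z))) l)) b)
        \<le> sum_list (map (\<lambda>z. fst z * bisim_metric (fst (snd z)) (snd (snd z))) l)"
  proof (cases "b = a")
    case False then show ?thesis using nn by (simp add: der_pref hausdorff_empty)
  next
    case True
    define l' where "l' = map (\<lambda>z. (fst z, snd (snd z), fst (snd z))) l"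
    have w': "wl l'" using w by (simp add: wl_def l'_def o_def)
    have k1: "kantorovich bisim_metric (mix (map (\<lambda>z. (fst z, return_pmf (fst (snd z)))) l))
                       (mix (map (\<lambda>z. (fst z, return_pmf (snd (snd z)))) l))
         \<le> sum_list (map (\<lambda>z. fst z * bisim_metric (fst (snd z)) (snd (snd z))) l)"
      by (rule K_mixret[OF _ w]) (simp add: bm_bounds)
    have k2: "kantorovich bisim_metric (mix (map (\<lambda>z. (fst z, return_pmf (fst (snd z)))) l'))
                       (mix (map (\<lambda>z. (fst z, return_pmf (snd (snd z)))) l'))
         \<le> sum_list (map (\<lambda>z. fst z * bisim_metric (fst (snd z)) (snd (snd z))) l')"
      by (rule K_mixret[OF _ w']) (simp add: bm_bounds)
    have k2': "kantorovich bisim_metric (mix (map (\<lambda>z. (fst z, return_pmf (snd (snd z)))) l))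
                       (mix (map (\<lambda>z. (fst z, return_pmf (fst (snd z)))) l))
         \<le> sum_list (map (\<lambda>z. fst z * bisim_metric (fst (snd z)) (snd (snd z))) l)"
      using k2 by (simp add: l'_def o_def bm_sym[of "snd (snd _)"])
    show ?thesis using True k1 k2'
      by (simp add: der_pref hausdorff_single o_def case_prod_beta)
  qed
qed

section \<open>Choice\<close>

lemma infs_sub:
  assumes "\<And>x y. 0 \<le> dh x y \<and> dh x y \<le> 1" "B1 \<subseteq> B"
  shows "infs ((\<lambda>q. dh p q) ` B) \<le> infs ((\<lambda>q. dh p q) ` B1)"
proof (cases "B1 = {}")
  case True
  have "infs ((\<lambda>q. dh p q) ` B) \<le> 1" using infs_bounds[of "(\<lambda>q. dh p q) ` B"] assms(1) by blast
  then show ?thesis using True by (simp add: infs_def)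
next
  case False
  show ?thesis
    by (rule infs_greatest) (use False assms in \<open>auto intro!: infs_lower\<close>)
qed

lemma H_union:
  assumes dh: "\<And>x y. 0 \<le> dh x y \<and> dh x y \<le> 1"
  shows "H dh (A1 \<union> A2) (B1 \<union> B2) \<le> max (H dh A1 B1) (H dh A2 B2)"
proof -
  have hb: "0 \<le> H dh A B \<and> H dh A B \<le> 1" for A B by (rule H_bounds) (rule dh)
  have ib: "0 \<le> infs ((\<lambda>q. dh p q) ` B) \<and> infs ((\<lambda>q. dh p q) ` B) \<le> 1" for p B
    by (rule infs_bounds) (use dh in auto)
  have one: "infs ((\<lambda>q. dh p q) ` (B1 \<union> B2)) \<le> H dh A1 B1" if "p \<in> A1" for p
  proof -
    have "infs ((\<lambda>q. dh p q) ` (B1 \<union> B2)) \<le> infs ((\<lambda>q. dh p q) ` B1)"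
      by (rule infs_sub[OF dh]) auto
    also have "\<dots> \<le> H dh A1 B1" unfolding H_def
      by (rule sups_upper) (use that ib in auto)
    finally show ?thesis .
  qed
  have two: "infs ((\<lambda>q. dh p q) ` (B1 \<union> B2)) \<le> H dh A2 B2" if "p \<in> A2" for p
  proof -
    have "infs ((\<lambda>q. dh p q) ` (B1 \<union> B2)) \<le> infs ((\<lambda>q. dh p q) ` B2)"
      by (rule infs_sub[OF dh]) auto
    also have "\<dots> \<le> H dh A2 B2" unfolding H_def
      by (rule sups_upper) (use that ib in auto)
    finally show ?thesis .
  qed
  show ?thesis unfolding H_def[of dh "A1 \<union> A2"]
    by (rule sups_least) (use one two hb in \<open>auto simp: le_max_iff_disj\<close>)
qed

lemma bm_plus: "bisim_metric (Plus u1 u2) (Plus v1 v2) \<le> max (bisim_metric u1 v1) (bisim_metric u2 v2)"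
proof (cases "proc (Plus u1 u2) \<and> proc (Plus v1 v2)")
  case False
  then show ?thesis using md_nonproc[OF bm_md False] bm_bounds[of u1 v1] by (simp add: le_max_iff_disj)
next
  case True
  then have p: "proc u1" "proc u2" "proc v1" "proc v2" by (auto simp: proc_plus)
  show ?thesis
  proof (rule bm_via_H)
    show "0 \<le> max (bisim_metric u1 v1) (bisim_metric u2 v2)" using bm_bounds[of u1 v1] by (simp add: le_max_iff_disj)
    fix a
    let ?K = "kantorovich bisim_metric"
    have h1: "hausdorff ?K (der u1 a) (der v1 a) \<le> bisim_metric u1 v1" by (rule bm_ge_H) (use p in auto)
    have h2: "hausdorff ?K (der u2 a) (der v2 a) \<le> bisim_metric u2 v2" by (rule bm_ge_H) (use p in auto)
    have "H ?K (der u1 a \<union> der u2 a) (der v1 a \<union> der v2 a) \<le> max (H ?K (der u1 a) (der v1 a)) (H ?K (der u2 a) (der v2 a))"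
      by (rule H_union) (rule Kbm)
    moreover have "H ?K (der v1 a \<union> der v2 a) (der u1 a \<union> der u2 a) \<le> max (H ?K (der v1 a) (der u1 a)) (H ?K (der v2 a) (der u2 a))"
      by (rule H_union) (rule Kbm)
    ultimately show "hausdorff ?K (der (Plus u1 u2) a) (der (Plus v1 v2) a) \<le> max (bisim_metric u1 v1) (bisim_metric u2 v2)"
      using h1 h2 unfolding der_plus hausdorff_H by (auto simp: max_def split: if_splits)
  qed
qed



lemma arith_bound:
  fixes E1 E2 c1 c2 \<delta> :: real
  assumes "0 \<le> E1" "E1 \<le> 1" "0 \<le> E2" "E2 \<le> 1" "E1 \<le> c1 + \<delta>" "E2 \<le> c2 + \<delta>"
    "0 \<le> c1" "c1 \<le> 1" "0 \<le> c2" "c2 \<le> 1" "0 \<le> \<delta>"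
  shows "1 - (1 - E1) * (1 - E2) \<le> 1 - (1 - c1) * (1 - c2) + 2 * \<delta>"
proof -
  define a where "a = 1 - c1"
  define b where "b = 1 - c2"
  define x where "x = 1 - E1"
  define y where "y = 1 - E2"
  have "a * (b - y) \<le> a * \<delta>" using assms by (intro mult_left_mono) (auto simp: a_def b_def y_def)
  moreover have "y * (a - x) \<le> y * \<delta>" using assms by (intro mult_left_mono) (auto simp: a_def x_def y_def)
  moreover have "a * \<delta> \<le> \<delta>" using assms by (intro mult_left_le_one_le) (auto simp: a_def)
  moreover have "y * \<delta> \<le> \<delta>" using assms by (intro mult_left_le_one_le) (auto simp: y_def)
  moreover have "a * b - x * y = a * (b - y) + y * (a - x)" by (simp add: algebra_simps)
  ultimately have "a * b - x * y \<le> 2 * \<delta>" by linarith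
  then show ?thesis by (simp add: a_def b_def x_def y_def)
qed

lemma match:
  assumes d: "\<And>x y. 0 \<le> d x y \<and> d x y \<le> 1"
    and h: "H (kantorovich d) P Q \<le> c" and c: "c < 1" and p: "\<pi> \<in> P" and e: "0 < \<epsilon>"
  shows "\<exists>\<rho>\<in>Q. \<exists>\<omega>\<in>couplings \<pi> \<rho>. measure_pmf.expectation \<omega> (\<lambda>(t, t'). d t t') < c + \<epsilon>"
proof -
  have Kb: "0 \<le> kantorovich d x y \<and> kantorovich d x y \<le> 1" for x y by (rule K_bounds) (rule d)
  have ib: "0 \<le> infs ((\<lambda>q. kantorovich d x q) ` Q) \<and> infs ((\<lambda>q. kantorovich d x q) ` Q) \<le> 1" for x
    by (rule infs_bounds) (use Kb in auto)
  have "infs ((\<lambda>q. kantorovich d \<pi> q) ` Q) \<le> H (kantorovich d) P Q"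
    unfolding H_def by (rule sups_upper) (use p ib in auto)
  with h have i: "infs ((\<lambda>q. kantorovich d \<pi> q) ` Q) \<le> c" by simp
  have ne: "Q \<noteq> {}"
  proof
    assume "Q = {}" then show False using i c by (simp add: infs_def)
  qed
  then have "Inf ((\<lambda>q. kantorovich d \<pi> q) ` Q) < c + \<epsilon>" using i e by (simp add: infs_def)
  then obtain \<rho> where r: "\<rho> \<in> Q" "kantorovich d \<pi> \<rho> < c + \<epsilon>"
    using cInf_lessD[of "(\<lambda>q. kantorovich d \<pi> q) ` Q"] ne by auto
  then have "Inf ((\<lambda>\<omega>. measure_pmf.expectation \<omega> (\<lambda>(t, t'). d t t')) ` couplings \<pi> \<rho>) < c + \<epsilon>"
    by (simp add: kantorovich_def)
  then obtain \<omega> where "\<omega> \<in> couplings \<pi> \<rho>" "measure_pmf.expectation \<omega> (\<lambda>(t, t'). d t t') < c + \<epsilon>"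
    using cInf_lessD[of "(\<lambda>\<omega>. measure_pmf.expectation \<omega> (\<lambda>(t, t'). d t t')) ` couplings \<pi> \<rho>"] couplings_pair[of \<pi> \<rho>]
    by blast
  then show ?thesis using r by blast
qed

lemma E_d_bounds:
  fixes d :: "'x \<Rightarrow> 'y \<Rightarrow> real"
  assumes d: "\<And>x y. 0 \<le> d x y \<and> d x y \<le> 1"
  shows "0 \<le> measure_pmf.expectation \<omega> (\<lambda>(t, t'). d t t') \<and> measure_pmf.expectation \<omega> (\<lambda>(t, t'). d t t') \<le> 1"
  using E_bounds[of 0 "\<lambda>(t, t'). d t t'" 1 \<omega>] d by (auto split: prod.splits)

lemma par_coupling:
  fixes d d' :: "('a, 'v) pterm \<Rightarrow> ('a, 'v) pterm \<Rightarrow> real"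
  assumes d: "\<And>x y. 0 \<le> d x y \<and> d x y \<le> 1"
    and d': "\<And>x y. 0 \<le> d' x y \<and> d' x y \<le> 1"
    and dp: "\<And>x1 x2 y1 y2. d' (Par B x1 x2) (Par B y1 y2) \<le> 1 - (1 - d x1 y1) * (1 - d x2 y2)"
    and w1: "\<omega>1 \<in> couplings \<pi>1 \<rho>1" and w2: "\<omega>2 \<in> couplings \<pi>2 \<rho>2"
  shows "kantorovich d' (map_pmf (\<lambda>(x, y). Par B x y) (pair_pmf \<pi>1 \<pi>2))
                        (map_pmf (\<lambda>(x, y). Par B x y) (pair_pmf \<rho>1 \<rho>2))
         \<le> 1 - (1 - measure_pmf.expectation \<omega>1 (\<lambda>(t, t'). d t t'))
               * (1 - measure_pmf.expectation \<omega>2 (\<lambda>(t, t'). d t t'))"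
proof -
  define \<omega> where "\<omega> = map_pmf (\<lambda>((x1, y1), (x2, y2)). (Par B x1 x2, Par B y1 y2)) (pair_pmf \<omega>1 \<omega>2)"
  define dd where "dd = (\<lambda>(t, t'). d t t')"
  have ddb: "0 \<le> dd z \<and> dd z \<le> 1" for z using d by (auto simp: dd_def split: prod.splits)
  have m1: "map_pmf fst \<omega> = map_pmf (\<lambda>(x, y). Par B x y) (map_pmf (\<lambda>(a, b). (fst a, fst b)) (pair_pmf \<omega>1 \<omega>2))"
    unfolding \<omega>_def pmf.map_comp by (intro map_pmf_cong) auto
  have m2: "map_pmf snd \<omega> = map_pmf (\<lambda>(x, y). Par B x y) (map_pmf (\<lambda>(a, b). (snd a, snd b)) (pair_pmf \<omega>1 \<omega>2))"
    unfolding \<omega>_def pmf.map_comp by (intro map_pmf_cong) auto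
  have c: "\<omega> \<in> couplings (map_pmf (\<lambda>(x, y). Par B x y) (pair_pmf \<pi>1 \<pi>2))
                        (map_pmf (\<lambda>(x, y). Par B x y) (pair_pmf \<rho>1 \<rho>2))"
    unfolding couplings_def using w1 w2 m1 m2 by (simp add: map_pair couplings_def)
  have "kantorovich d' (map_pmf (\<lambda>(x, y). Par B x y) (pair_pmf \<pi>1 \<pi>2))
                        (map_pmf (\<lambda>(x, y). Par B x y) (pair_pmf \<rho>1 \<rho>2))
        \<le> measure_pmf.expectation \<omega> (\<lambda>(t, t'). d' t t')"
    by (rule K_le[OF c]) (use d' in auto)
  also have "\<dots> = measure_pmf.expectation (pair_pmf \<omega>1 \<omega>2)
       (\<lambda>z. d' (Par B (fst (fst z)) (fst (snd z))) (Par B (snd (fst z)) (snd (snd z))))"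
    unfolding \<omega>_def by (simp add: case_prod_beta)
  also have "\<dots> \<le> measure_pmf.expectation (pair_pmf \<omega>1 \<omega>2)
       (\<lambda>z. 1 - (1 - dd (fst z)) * (1 - dd (snd z)))"
  proof (rule E_mono)
    fix z :: "(('a, 'v) pterm \<times> ('a, 'v) pterm) \<times> (('a, 'v) pterm \<times> ('a, 'v) pterm)"
    show "0 \<le> d' (Par B (fst (fst z)) (fst (snd z))) (Par B (snd (fst z)) (snd (snd z)))" using d' by simp
    show "d' (Par B (fst (fst z)) (fst (snd z))) (Par B (snd (fst z)) (snd (snd z)))
          \<le> 1 - (1 - dd (fst z)) * (1 - dd (snd z))"
      using dp by (simp add: dd_def case_prod_beta)
    show "1 - (1 - dd (fst z)) * (1 - dd (snd z)) \<le> 1"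
      using ddb[of "fst z"] ddb[of "snd z"] by simp
  qed
  also have "\<dots> = 1 - measure_pmf.expectation (pair_pmf \<omega>1 \<omega>2) (\<lambda>z. (1 - dd (fst z)) * (1 - dd (snd z)))"
    by (rule E_one_minus) (use ddb in \<open>auto intro: mult_le_one\<close>)
  also have "measure_pmf.expectation (pair_pmf \<omega>1 \<omega>2) (\<lambda>z. (1 - dd (fst z)) * (1 - dd (snd z)))
      = measure_pmf.expectation \<omega>1 (\<lambda>z. 1 - dd z) * measure_pmf.expectation \<omega>2 (\<lambda>z. 1 - dd z)"
    by (rule E_pair_prod) (use ddb in auto)
  also have "measure_pmf.expectation \<omega>1 (\<lambda>z. 1 - dd z) = 1 - measure_pmf.expectation \<omega>1 dd"
    by (rule E_one_minus) (use ddb in auto)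
  also have "measure_pmf.expectation \<omega>2 (\<lambda>z. 1 - dd z) = 1 - measure_pmf.expectation \<omega>2 dd"
    by (rule E_one_minus) (use ddb in auto)
  finally show ?thesis by (simp add: dd_def)
qed

lemma return_coupling: "return_pmf (x, y) \<in> couplings (return_pmf x) (return_pmf y)"
  by (simp add: couplings_def)

lemma map_par_left: "map_pmf (\<lambda>x. Par B x t2) \<pi>1 = map_pmf (\<lambda>(x, y). Par B x y) (pair_pmf \<pi>1 (return_pmf t2))"
  by (simp add: pair_return_pmf2 pmf.map_comp o_def)

lemma map_par_right: "map_pmf (\<lambda>y. Par B t1 y) \<pi>2 = map_pmf (\<lambda>(x, y). Par B x y) (pair_pmf (return_pmf t1) \<pi>2)"
  by (simp add: pair_return_pmf1 pmf.map_comp o_def)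

lemma par_H:
  fixes d d' :: "('a, 'v) pterm \<Rightarrow> ('a, 'v) pterm \<Rightarrow> real"
  assumes d: "\<And>x y. 0 \<le> d x y \<and> d x y \<le> 1"
    and d': "\<And>x y. 0 \<le> d' x y \<and> d' x y \<le> 1"
    and dp: "\<And>x1 x2 y1 y2. d' (Par B x1 x2) (Par B y1 y2) \<le> 1 - (1 - d x1 y1) * (1 - d x2 y2)"
    and H1: "H (kantorovich d) (der u1 a) (der v1 a) \<le> c1"
    and H2: "H (kantorovich d) (der u2 a) (der v2 a) \<le> c2"
    and c1: "d u1 v1 \<le> c1" "c1 \<le> 1" and c2: "d u2 v2 \<le> c2" "c2 \<le> 1"
  shows "H (kantorovich d') (der (Par B u1 u2) a) (der (Par B v1 v2) a) \<le> 1 - (1 - c1) * (1 - c2)"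
proof -
  have c10: "0 \<le> c1" using d[of u1 v1] c1 by simp
  have c20: "0 \<le> c2" using d[of u2 v2] c2 by simp
  have Kb': "0 \<le> kantorovich d' x y \<and> kantorovich d' x y \<le> 1" for x y by (rule K_bounds) (rule d')
  have rhs0: "0 \<le> 1 - (1 - c1) * (1 - c2)" using c10 c20 c1 c2 by (simp add: mult_le_one)
  show ?thesis
  proof (cases "c1 = 1 \<or> c2 = 1")
    case True
    then show ?thesis using H_bounds[of "kantorovich d'"] Kb' by auto
  next
    case False
    then have c1l: "c1 < 1" and c2l: "c2 < 1" using c1 c2 by auto
    show ?thesis unfolding H_def
    proof (rule sups_least[OF _ rhs0])
      fix s assume "s \<in> (\<lambda>p. infs ((\<lambda>q. kantorovich d' p q) ` der (Par B v1 v2) a)) ` der (Par B u1 u2) a"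
      then obtain \<pi> where \<pi>: "trans (Par B u1 u2) a \<pi>"
        and s: "s = infs ((\<lambda>q. kantorovich d' \<pi> q) ` der (Par B v1 v2) a)" by (auto simp: der_def)
      show "s \<le> 1 - (1 - c1) * (1 - c2)"
      proof (rule field_le_epsilon)
        fix \<epsilon> :: real assume e: "0 < \<epsilon>"
        have e2: "0 < \<epsilon> / 2" using e by simp
        have step: "kantorovich d' (map_pmf (\<lambda>(x, y). Par B x y) (pair_pmf \<pi>1 \<pi>2))
                        (map_pmf (\<lambda>(x, y). Par B x y) (pair_pmf \<rho>1 \<rho>2)) \<le> 1 - (1 - c1) * (1 - c2) + \<epsilon>"
          if "\<omega>1 \<in> couplings \<pi>1 \<rho>1" "\<omega>2 \<in> couplings \<pi>2 \<rho>2"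
             "measure_pmf.expectation \<omega>1 (\<lambda>(t, t'). d t t') \<le> c1 + \<epsilon> / 2"
             "measure_pmf.expectation \<omega>2 (\<lambda>(t, t'). d t t') \<le> c2 + \<epsilon> / 2"
          for \<pi>1 \<pi>2 \<rho>1 \<rho>2 \<omega>1 \<omega>2
        proof -
          have "kantorovich d' (map_pmf (\<lambda>(x, y). Par B x y) (pair_pmf \<pi>1 \<pi>2))
                        (map_pmf (\<lambda>(x, y). Par B x y) (pair_pmf \<rho>1 \<rho>2))
               \<le> 1 - (1 - measure_pmf.expectation \<omega>1 (\<lambda>(t, t'). d t t'))
                   * (1 - measure_pmf.expectation \<omega>2 (\<lambda>(t, t'). d t t'))"
            by (rule par_coupling[where d=d and d'=d' and B=B, OF d d' dp that(1,2)])
          also have "\<dots> \<le> 1 - (1 - c1) * (1 - c2) + 2 * (\<epsilon> / 2)"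
            by (rule arith_bound) (use E_d_bounds[where d=d, OF d, of \<omega>1] E_d_bounds[where d=d, OF d, of \<omega>2] that c1 c2 c10 c20 e in auto)
          finally show ?thesis by simp
        qed
        have inf_le: "s \<le> kantorovich d' \<pi> \<rho>" if "\<rho> \<in> der (Par B v1 v2) a" for \<rho>
          unfolding s by (rule infs_lower) (use that Kb' in auto)
        have "\<exists>\<rho>\<in>der (Par B v1 v2) a. kantorovich d' \<pi> \<rho> \<le> 1 - (1 - c1) * (1 - c2) + \<epsilon>"
          using trans_par_inv[OF \<pi>]
        proof (elim disjE exE conjE)
          fix \<pi>1 \<pi>2 assume a: "a \<in> B" and t1: "trans u1 a \<pi>1" and t2: "trans u2 a \<pi>2"
            and pe: "\<pi> = map_pmf (\<lambda>(x, y). Par B x y) (pair_pmf \<pi>1 \<pi>2)"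
          obtain \<rho>1 \<omega>1 where r1: "\<rho>1 \<in> der v1 a" "\<omega>1 \<in> couplings \<pi>1 \<rho>1"
              "measure_pmf.expectation \<omega>1 (\<lambda>(t, t'). d t t') < c1 + \<epsilon> / 2"
            using match[OF d H1 c1l _ e2, of \<pi>1] t1 by (auto simp: der_def)
          obtain \<rho>2 \<omega>2 where r2: "\<rho>2 \<in> der v2 a" "\<omega>2 \<in> couplings \<pi>2 \<rho>2"
              "measure_pmf.expectation \<omega>2 (\<lambda>(t, t'). d t t') < c2 + \<epsilon> / 2"
            using match[OF d H2 c2l _ e2, of \<pi>2] t2 by (auto simp: der_def)
          have "map_pmf (\<lambda>(x, y). Par B x y) (pair_pmf \<rho>1 \<rho>2) \<in> der (Par B v1 v2) a"
            using r1(1) r2(1) a by (auto simp: der_def intro: trans.sync)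
          moreover have "kantorovich d' \<pi> (map_pmf (\<lambda>(x, y). Par B x y) (pair_pmf \<rho>1 \<rho>2)) \<le> 1 - (1 - c1) * (1 - c2) + \<epsilon>"
            unfolding pe by (rule step[OF r1(2) r2(2)]) (use r1(3) r2(3) in auto)
          ultimately show ?thesis by blast
        next
          fix \<pi>1 assume a: "a \<notin> B" and t1: "trans u1 a \<pi>1"
            and pe: "\<pi> = map_pmf (\<lambda>x. Par B x u2) \<pi>1"
          obtain \<rho>1 \<omega>1 where r1: "\<rho>1 \<in> der v1 a" "\<omega>1 \<in> couplings \<pi>1 \<rho>1"
              "measure_pmf.expectation \<omega>1 (\<lambda>(t, t'). d t t') < c1 + \<epsilon> / 2"
            using match[OF d H1 c1l _ e2, of \<pi>1] t1 by (auto simp: der_def)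
          have "map_pmf (\<lambda>y. Par B y v2) \<rho>1 \<in> der (Par B v1 v2) a"
            using r1(1) a by (auto simp: der_def intro: trans.left)
          moreover have "kantorovich d' \<pi> (map_pmf (\<lambda>y. Par B y v2) \<rho>1) \<le> 1 - (1 - c1) * (1 - c2) + \<epsilon>"
            unfolding pe map_par_left
            by (rule step[OF r1(2) return_coupling]) (use r1(3) c2 e in auto)
          ultimately show ?thesis by blast
        next
          fix \<pi>2 assume a: "a \<notin> B" and t2: "trans u2 a \<pi>2"
            and pe: "\<pi> = map_pmf (\<lambda>y. Par B u1 y) \<pi>2"
          obtain \<rho>2 \<omega>2 where r2: "\<rho>2 \<in> der v2 a" "\<omega>2 \<in> couplings \<pi>2 \<rho>2"
              "measure_pmf.expectation \<omega>2 (\<lambda>(t, t'). d t t') < c2 + \<epsilon> / 2"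
            using match[OF d H2 c2l _ e2, of \<pi>2] t2 by (auto simp: der_def)
          have "map_pmf (\<lambda>y. Par B v1 y) \<rho>2 \<in> der (Par B v1 v2) a"
            using r2(1) a by (auto simp: der_def intro: trans.right)
          moreover have "kantorovich d' \<pi> (map_pmf (\<lambda>y. Par B v1 y) \<rho>2) \<le> 1 - (1 - c1) * (1 - c2) + \<epsilon>"
            unfolding pe map_par_right
            by (rule step[OF return_coupling r2(2)]) (use r2(3) c1 e in auto)
          ultimately show ?thesis by blast
        qed
        then show "s \<le> 1 - (1 - c1) * (1 - c2) + \<epsilon>" using inf_le by (blast intro: order_trans)
      qed
    qed
  qed
qed




definition dpar :: "('a, 'v) pterm \<Rightarrow> ('a, 'v) pterm \<Rightarrow> real" where
  "dpar s s' = (case s of Par B u1 u2 \<Rightarrow> (case s' of Par B' v1 v2 \<Rightarrow>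
       if B = B' then min (bisim_metric s s') (1 - (1 - bisim_metric u1 v1) * (1 - bisim_metric u2 v2))
       else bisim_metric s s'
     | _ \<Rightarrow> bisim_metric s s') | _ \<Rightarrow> bisim_metric s s')"

lemma beta_nonneg: "0 \<le> 1 - (1 - bisim_metric a b) * (1 - bisim_metric c d)"
  using bm_bounds[of a b] bm_bounds[of c d] by (simp add: mult_le_one)

lemma beta_le1: "(1 - bisim_metric a b) * (1 - bisim_metric c d) \<le> 1"
  using beta_nonneg[of a b c d] by simp

lemma dpar_le: "dpar s s' \<le> bisim_metric s s'"
  by (cases s; cases s') (auto simp: dpar_def)

lemma dpar_nonneg: "0 \<le> dpar s s'"
  by (cases s; cases s') (auto simp: dpar_def bm_bounds beta_le1)

lemma dpar_Par: "dpar (Par B x1 x2) (Par B y1 y2) \<le> 1 - (1 - bisim_metric x1 y1) * (1 - bisim_metric x2 y2)"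
  by (simp add: dpar_def)

lemma dpar_md: "dpar \<in> metric_dom"
  unfolding metric_dom_def
proof (intro CollectI allI conjI impI)
  fix t t'
  show "0 \<le> dpar t t'" by (rule dpar_nonneg)
  show "dpar t t' \<le> 1" using dpar_le[of t t'] bm_bounds[of t t'] by simp
  assume "\<not> (proc t \<and> proc t')"
  then have "bisim_metric t t' = 0" by (rule md_nonproc[OF bm_md])
  then show "dpar t t' = 0" using dpar_le[of t t'] dpar_nonneg[of t t'] by linarith
qed

lemma dpar_bounds: "0 \<le> dpar x y \<and> dpar x y \<le> 1"
  using md_bounds[OF dpar_md] .

lemma Bfun_dpar_Par:
  "Bfun dpar (Par B u1 u2) (Par B v1 v2) \<le> 1 - (1 - bisim_metric u1 v1) * (1 - bisim_metric u2 v2)"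
proof (cases "proc (Par B u1 u2) \<and> proc (Par B v1 v2)")
  case False
  have "Bfun dpar (Par B u1 u2) (Par B v1 v2) = 0" unfolding Bfun_def using False by (simp only: if_False)
  then show ?thesis using beta_le1[of u1 v1 u2 v2] by simp
next
  case True
  then have p: "proc u1" "proc u2" "proc v1" "proc v2" by (auto simp: proc_par)
  let ?K = "kantorovich bisim_metric"
  have h: "H ?K (der x a) (der y a) \<le> bisim_metric x y" "H ?K (der y a) (der x a) \<le> bisim_metric x y"
    if "proc x" "proc y" for x y a
    using bm_ge_H[OF that, of a] unfolding hausdorff_H by auto
  have "hausdorff (kantorovich dpar) (der (Par B u1 u2) a) (der (Par B v1 v2) a)
        \<le> 1 - (1 - bisim_metric u1 v1) * (1 - bisim_metric u2 v2)" for a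
  proof -
    have A: "H (kantorovich dpar) (der (Par B u1 u2) a) (der (Par B v1 v2) a)
        \<le> 1 - (1 - bisim_metric u1 v1) * (1 - bisim_metric u2 v2)"
      by (rule par_H[where d=bisim_metric and d'=dpar]) 
         (use bm_bounds dpar_bounds dpar_Par h(1)[OF p(1,3)] h(1)[OF p(2,4)] in auto)
    have B: "H (kantorovich dpar) (der (Par B v1 v2) a) (der (Par B u1 u2) a)
        \<le> 1 - (1 - bisim_metric u1 v1) * (1 - bisim_metric u2 v2)"
      by (rule par_H[where d=bisim_metric and d'=dpar])
         (use bm_bounds dpar_bounds dpar_Par h(2)[OF p(1,3)] h(2)[OF p(2,4)] bm_sym[of v1 u1] bm_sym[of v2 u2] in auto)
    show ?thesis using A B by (simp add: hausdorff_H)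
  qed
  then show ?thesis unfolding Bfun_def using True beta_nonneg by (auto intro!: sups_least)
qed

lemma dpar_pre: "Bfun dpar s s' \<le> dpar s s'"
proof -
  have le: "Bfun dpar s s' \<le> bisim_metric s s'"
    using Bfun_mono[OF dpar_md bm_md dpar_le, of s s'] by (simp add: bm_fix)
  show ?thesis
  proof (cases s)
    case (Par B u1 u2)
    show ?thesis
    proof (cases s')
      case (Par B' v1 v2)
      show ?thesis
      proof (cases "B = B'")
        case True
        then show ?thesis using le Bfun_dpar_Par[of B u1 u2 v1 v2] \<open>s = Par B u1 u2\<close> Par
          by (simp add: dpar_def)
      qed (use le \<open>s = Par B u1 u2\<close> Par in \<open>simp add: dpar_def\<close>)
    qed (use le \<open>s = Par B u1 u2\<close> in \<open>simp_all add: dpar_def\<close>)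
  qed (use le in \<open>simp_all add: dpar_def\<close>)
qed

lemma bm_par: "bisim_metric (Par B u1 u2) (Par B v1 v2) \<le> 1 - (1 - bisim_metric u1 v1) * (1 - bisim_metric u2 v2)"
proof -
  have "bisim_metric (Par B u1 u2) (Par B v1 v2) \<le> dpar (Par B u1 u2) (Par B v1 v2)"
    by (rule bm_least[OF dpar_md dpar_pre])
  also have "\<dots> \<le> 1 - (1 - bisim_metric u1 v1) * (1 - bisim_metric u2 v2)" by (rule dpar_Par)
  finally show ?thesis .
qed



lemma choose_list:
  assumes "\<And>z. z \<in> set qs \<Longrightarrow> \<exists>p. P z p"
  shows "\<exists>ps. list_all2 P qs ps"
  using assms
proof (induction qs)
  case Nil then show ?case by auto
next
  case (Cons z qs)
  then obtain p where "P z p" by auto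
  moreover obtain ps where "list_all2 P qs ps" using Cons by auto
  ultimately show ?case by (auto intro!: exI[of _ "p # ps"])
qed

lemma collect_V:
  assumes "list_all2 (\<lambda>z p. \<exists>V. finite V \<and> goodV p V) qs ps"
  shows "\<exists>V. finite V \<and> (\<forall>p\<in>set ps. goodV p V)"
  using assms
proof (induction rule: list_all2_induct)
  case Nil then show ?case by auto
next
  case (Cons z qs p ps)
  then obtain V1 V2 where "finite V1" "goodV p V1" "finite V2" "\<forall>p\<in>set ps. goodV p V2" by auto
  then show ?case by (intro exI[of _ "V1 \<union> V2"]) (auto intro: goodV_mono)
qed

lemma sum_le_list_all2:
  fixes f :: "real \<times> 'z \<Rightarrow> real" and g :: "'p \<Rightarrow> real"
  assumes "list_all2 (\<lambda>z p. 0 \<le> fst z \<and> f z \<le> g p) qs ps"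
  shows "sum_list (map (\<lambda>z. fst z * f z) qs) \<le> sum_list (map (\<lambda>z. fst z * g (snd z)) (zip (map fst qs) ps))"
  using assms
proof (induction rule: list_all2_induct)
  case Nil then show ?case by simp
next
  case (Cons z qs p ps)
  then have "fst z * f z \<le> fst z * g p" by (intro mult_left_mono) auto
  then show ?case using Cons by simp
qed

theorem main_claim:
  fixes t :: "('a, 'v) pterm" and \<sigma>1 \<sigma>2 :: "'v \<Rightarrow> ('a, 'v) pterm"
  defines "e \<equiv> (\<lambda>x. bisim_metric (\<sigma>1 x) (\<sigma>2 x))"
  shows "wf_term t \<Longrightarrow> \<exists>p\<in>den t. \<exists>V. finite V \<and> goodV p V \<and>
            bisim_metric (subst \<sigma>1 t) (subst \<sigma>2 t) \<le> pda p e"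
proof (induction t)
  have eb: "ebnd e" by (simp add: ebnd_def e_def bm_bounds)
  case PNil
  have "return_pmf (\<lambda>_. 0) \<in> den PNil" by simp
  moreover have "bisim_metric (subst \<sigma>1 PNil) (subst \<sigma>2 PNil) \<le> pda (return_pmf (\<lambda>_. 0)) e"
    using bm_nil by (simp add: pda_zero[OF eb])
  ultimately show ?case using goodV_zero by blast
next
  have eb: "ebnd e" by (simp add: ebnd_def e_def bm_bounds)
  case (PVar x)
  have "return_pmf (one_var x) \<in> down {return_pmf (one_var x)}"
    unfolding down_def using pm_le_refl by blast
  then have "return_pmf (one_var x) \<in> den (PVar x)" by (simp only: den.simps)
  moreover have "bisim_metric (subst \<sigma>1 (PVar x)) (subst \<sigma>2 (PVar x)) \<le> pda (return_pmf (one_var x)) e"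
  proof -
    have "pda (return_pmf (one_var x)) e = e x" by (rule pda_var[OF eb])
    then show ?thesis unfolding subst.simps e_def by simp
  qed
  ultimately show ?case using goodV_var[of x] by (intro bexI[of _ "return_pmf (one_var x)"] exI[of _ "{x}"]) auto
next
  have eb: "ebnd e" by (simp add: ebnd_def e_def bm_bounds)
  case (Plus t1 t2)
  then obtain p1 V1 p2 V2 where p1: "p1 \<in> den t1" "finite V1" "goodV p1 V1"
      "bisim_metric (subst \<sigma>1 t1) (subst \<sigma>2 t1) \<le> pda p1 e"
    and p2: "p2 \<in> den t2" "finite V2" "goodV p2 V2"
      "bisim_metric (subst \<sigma>1 t2) (subst \<sigma>2 t2) \<le> pda p2 e" by auto
  have b: "bisim_metric (subst \<sigma>1 (Plus t1 t2)) (subst \<sigma>2 (Plus t1 t2)) \<le> max (pda p1 e) (pda p2 e)"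
    using bm_plus[of "subst \<sigma>1 t1" "subst \<sigma>1 t2" "subst \<sigma>2 t1" "subst \<sigma>2 t2"] p1(4) p2(4) by auto
  show ?case
  proof (cases "pda p2 e \<le> pda p1 e")
    case True
    then show ?thesis using b p1 by (intro bexI[of _ p1] exI[of _ V1]) (auto simp: max_def)
  next
    case False
    then show ?thesis using b p2 by (intro bexI[of _ p2] exI[of _ V2]) (auto simp: max_def)
  qed
next
  have eb: "ebnd e" by (simp add: ebnd_def e_def bm_bounds)
  case (Par B t1 t2)
  then obtain p1 V1 p2 V2 where p1: "p1 \<in> den t1" "finite V1" "goodV p1 V1"
      "bisim_metric (subst \<sigma>1 t1) (subst \<sigma>2 t1) \<le> pda p1 e"
    and p2: "p2 \<in> den t2" "finite V2" "goodV p2 V2"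
      "bisim_metric (subst \<sigma>1 t2) (subst \<sigma>2 t2) \<le> pda p2 e" by auto
  define V where "V = V1 \<union> V2"
  have g1: "goodV p1 V" and g2: "goodV p2 V" using p1 p2 by (auto simp: V_def intro: goodV_mono)
  have fV: "finite V" using p1 p2 by (simp add: V_def)
  have den: "parp p1 p2 \<in> den (Par B t1 t2)"
    using p1(1) p2(1) pm_le_refl by (auto simp: parp_def)
  have pb1: "0 \<le> pda p1 e \<and> pda p1 e \<le> 1" "0 \<le> pda p2 e \<and> pda p2 e \<le> 1" using pda_bounds[OF eb] by auto
  define a1 where "a1 = bisim_metric (subst \<sigma>1 t1) (subst \<sigma>2 t1)"
  define a2 where "a2 = bisim_metric (subst \<sigma>1 t2) (subst \<sigma>2 t2)"
  have ab: "0 \<le> a1" "0 \<le> a2" unfolding a1_def a2_def using bm_bounds by auto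
  have "bisim_metric (subst \<sigma>1 (Par B t1 t2)) (subst \<sigma>2 (Par B t1 t2)) \<le> 1 - (1 - a1) * (1 - a2)"
    using bm_par unfolding a1_def a2_def by simp
  also have "\<dots> \<le> 1 - (1 - pda p1 e) * (1 - pda p2 e)"
  proof -
    have "(1 - pda p1 e) * (1 - pda p2 e) \<le> (1 - a1) * (1 - a2)"
      using pb1 ab p1(4) p2(4) unfolding a1_def[symmetric] a2_def[symmetric]
      by (intro mult_mono) auto
    then show ?thesis by simp
  qed
  also have "\<dots> = pda (parp p1 p2) e" by (rule pda_par[OF fV g1 g2 eb, symmetric])
  finally show ?case using den fV goodV_par[OF g1 g2] by blast
next
  have eb: "ebnd e" by (simp add: ebnd_def e_def bm_bounds)
  case (Pref a qs)
  have wf: "qs \<noteq> []" "\<And>z. z \<in> set qs \<Longrightarrow> 0 < fst z \<and> fst z \<le> 1"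
    "sum_list (map fst qs) = 1" "\<And>z. z \<in> set qs \<Longrightarrow> wf_term (snd z)"
    using Pref.prems by (auto simp: list_all_iff)
  have IH: "\<exists>p\<in>den (snd z). \<exists>V. finite V \<and> goodV p V \<and>
            bisim_metric (subst \<sigma>1 (snd z)) (subst \<sigma>2 (snd z)) \<le> pda p e" if "z \<in> set qs" for z
    using Pref.IH[of z "snd z"] that wf(4)[OF that] by (cases z) auto
  define P where "P = (\<lambda>(z :: real \<times> ('a, 'v) pterm) p. 0 \<le> fst z \<and> p \<in> den (snd z) \<and> (\<exists>V. finite V \<and> goodV p V) \<and>
            bisim_metric (subst \<sigma>1 (snd z)) (subst \<sigma>2 (snd z)) \<le> pda p e)"
  obtain ps where ps: "list_all2 P qs ps"
  proof -
    have "\<exists>p. P z p" if "z \<in> set qs" for z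
      using IH[OF that] wf(2)[OF that] unfolding P_def by auto
    then show ?thesis using choose_list[of qs P] that by blast
  qed
  have len: "length ps = length qs" using list_all2_lengthD[OF ps] by simp
  obtain V where V: "finite V" "\<forall>p\<in>set ps. goodV p V"
  proof -
    have "list_all2 (\<lambda>z p. \<exists>V. finite V \<and> goodV p V) qs ps"
      by (rule list_all2_mono[OF ps]) (simp add: P_def)
    then show ?thesis using collect_V that by blast
  qed
  define pm where "pm = mix (zip (map fst qs) ps)"
  have mw: "mixwf (zip (map fst qs) ps)"
  proof -
    have "0 \<le> fst z" if "z \<in> set (zip (map fst qs) ps)" for z
    proof -
      have "fst z \<in> set (map fst qs)" using set_zip_leftD[of "fst z" "snd z" "map fst qs" ps] that by simp
      then obtain y where "y \<in> set qs" "fst z = fst y" by auto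
      then show ?thesis using wf(2)[of y] by simp
    qed
    then show ?thesis unfolding mixwf_def using wf(3) len by simp
  qed
  have den: "pm \<in> den (Pref a qs)"
  proof -
    have "list_all2 (\<lambda>(q, P) p'. p' \<in> P) (map (map_prod id den) qs) ps"
      unfolding list_all2_map1 by (rule list_all2_mono[OF ps]) (auto simp: P_def)
    then show ?thesis unfolding pm_def den.simps mem_Collect_eq by (blast intro: pm_le_refl)
  qed
  have good: "goodV pm V" unfolding pm_def
    by (rule goodV_mix[OF mw]) (use V in \<open>auto dest!: set_zip_rightD\<close>)
  define l where "l = map (\<lambda>z. (fst z, subst \<sigma>1 (snd z), subst \<sigma>2 (snd z))) qs"
  have wl0: "0 \<le> fst z" if zl: "z \<in> set l" for z
  proof -
    obtain y where "y \<in> set qs" "z = (fst y, subst \<sigma>1 (snd y), subst \<sigma>2 (snd y))"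
      using zl by (auto simp: l_def)
    then show ?thesis using wf(2)[of y] by simp
  qed
  have wl: "wl l" using wf(3) wl0 by (auto simp: wl_def l_def o_def)
  have "bisim_metric (subst \<sigma>1 (Pref a qs)) (subst \<sigma>2 (Pref a qs))
      = bisim_metric (Pref a (map (\<lambda>z. (fst z, fst (snd z))) l)) (Pref a (map (\<lambda>z. (fst z, snd (snd z))) l))"
    by (simp add: l_def map_prod_def split_def o_def)
  also have "\<dots> \<le> sum_list (map (\<lambda>z. fst z * bisim_metric (fst (snd z)) (snd (snd z))) l)"
    by (rule bm_pref[OF wl])
  also have "\<dots> = sum_list (map (\<lambda>z. fst z * bisim_metric (subst \<sigma>1 (snd z)) (subst \<sigma>2 (snd z))) qs)"
    by (simp add: l_def o_def)
  also have "\<dots> \<le> sum_list (map (\<lambda>z. fst z * pda (snd z) e) (zip (map fst qs) ps))"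
    by (rule sum_le_list_all2, rule list_all2_mono[OF ps]) (simp add: P_def)
  also have "\<dots> = pda pm e" unfolding pm_def by (rule pda_mix[OF mw eb, symmetric])
  finally show ?case using den good V(1) by blast
qed

theorem theorem1:
  fixes t :: "('a::countable, 'v::countable) pterm"
    and \<sigma>1 \<sigma>2 :: "'v \<Rightarrow> ('a, 'v) pterm"
  assumes "infinite (UNIV :: 'v set)"
    and "wf_term t"
    and "closed_subst \<sigma>1" and "closed_subst \<sigma>2"
    and "\<forall>x. bisim_metric (\<sigma>1 x) (\<sigma>2 x) < 1"
  shows "bisim_metric (subst \<sigma>1 t) (subst \<sigma>2 t)
           \<le> da (den t) (\<lambda>x. bisim_metric (\<sigma>1 x) (\<sigma>2 x))"
proof -
  have eb: "ebnd (\<lambda>x. bisim_metric (\<sigma>1 x) (\<sigma>2 x))" by (simp add: ebnd_def bm_bounds)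
  obtain p where p: "p \<in> den t"
    "bisim_metric (subst \<sigma>1 t) (subst \<sigma>2 t) \<le> pda p (\<lambda>x. bisim_metric (\<sigma>1 x) (\<sigma>2 x))"
    using main_claim[OF assms(2), of \<sigma>1 \<sigma>2] by blast
  show ?thesis using p(2) da_ge[OF eb p(1)] by linarith
qed


end
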